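(* Fix an integer $\Lambda\ge2$ and let $G=(V,E)$ be a loopless series-parallel graph of maxmaxflow at most $\Lambda$. Let $\rho^\star_\Lambda$ be the unique solution in $(0,1)$ of $(1+\rho)^\Lambda=2(1+\rho^2)^{\Lambda-1}$ when $\Lambda\ge3$, and $\rho^\star_2=1$. Let $q\in\mathbb C$ satisfy $|q-1|\ge1/\rho^\star_\Lambda$ (strict inequality $>$ when $\Lambda=2$), put $\rho=1/|q-1|$ and $X=\big(2/(1+\rho)\big)^{1/(\Lambda-1)}$, and let the edge weights $\mathbf v=(v_e)_{e\in E}$ satisfy, for each $e$, either $v_e$ is real with $-1\le v_e\le0$, or $q+v_e\ne0$ and $\left|\dfrac{v_e}{q+v_e}\right|\le\rho\,\dfrac{X-1}{1-\rho X}$ (strict inequality in this second condition when $\Lambda=2$). Then $Z_G(q,\mathbf v)\neq0$.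
   Context: Multivariate Tutte polynomial of $G=(V,E)$: $Z_G(q,\mathbf v)=\sum_{A\subseteq E}q^{k(A)}\prod_{e\in A}v_e$, $k(A)$ = number of connected components of $(V,A)$. $\lambda_G(x,y)$ = maximum number of pairwise edge-disjoint $x$–$y$ paths; maxmaxflow $\Lambda(G)=\max_{x\ne y}\lambda_G(x,y)$ (0 if fewer than two vertices). A loopless graph is series-parallel if it can be obtained from a forest by a finite (possibly empty) sequence of operations, each replacing an edge by two edges in series (subdivision) or by two parallel edges. *)

theory Defs
  imports Complex_Main
begin

definition multigraph :: "'v set \<Rightarrow> 'e set \<Rightarrow> ('e \<Rightarrow> 'v \<times> 'v) \<Rightarrow> bool" where
  "multigraph V E ends \<longleftrightarrow> finite V \<and> finite E \<and> (\<forall>e\<in>E. fst (ends e) \<in> V \<and> snd (ends e) \<in> V)"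

definition loopless :: "'e set \<Rightarrow> ('e \<Rightarrow> 'v \<times> 'v) \<Rightarrow> bool" where
  "loopless E ends \<longleftrightarrow> (\<forall>e\<in>E. fst (ends e) \<noteq> snd (ends e))"

definition adj :: "'e set \<Rightarrow> ('e \<Rightarrow> 'v \<times> 'v) \<Rightarrow> ('v \<times> 'v) set" where
  "adj A ends = {(u, w). \<exists>e\<in>A. ends e = (u, w) \<or> ends e = (w, u)}"

definition conn :: "'v set \<Rightarrow> 'e set \<Rightarrow> ('e \<Rightarrow> 'v \<times> 'v) \<Rightarrow> ('v \<times> 'v) set" where
  "conn V A ends = (adj A ends)\<^sup>* \<inter> (V \<times> V)"

definition ncomp :: "'v set \<Rightarrow> 'e set \<Rightarrow> ('e \<Rightarrow> 'v \<times> 'v) \<Rightarrow> nat" where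
  "ncomp V A ends = card (V // conn V A ends)"

definition tutteZ :: "'v set \<Rightarrow> 'e set \<Rightarrow> ('e \<Rightarrow> 'v \<times> 'v) \<Rightarrow> complex \<Rightarrow> ('e \<Rightarrow> complex) \<Rightarrow> complex" where
  "tutteZ V E ends q v = (\<Sum>A\<in>Pow E. q ^ ncomp V A ends * (\<Prod>e\<in>A. v e))"

definition forest :: "'v set \<Rightarrow> 'e set \<Rightarrow> ('e \<Rightarrow> 'v \<times> 'v) \<Rightarrow> bool" where
  "forest V E ends \<longleftrightarrow> multigraph V E ends \<and>
     (\<forall>e\<in>E. (fst (ends e), snd (ends e)) \<notin> conn V (E - {e}) ends)"

inductive series_parallel :: "'v set \<Rightarrow> 'e set \<Rightarrow> ('e \<Rightarrow> 'v \<times> 'v) \<Rightarrow> bool" where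
  sp_forest: "forest V E ends \<Longrightarrow> series_parallel V E ends"
| sp_series: "\<lbrakk>series_parallel V E ends; e \<in> E; ends e = (a, b); w \<notin> V; e' \<notin> E\<rbrakk>
     \<Longrightarrow> series_parallel (insert w V) (insert e' E) (ends(e := (a, w), e' := (w, b)))"
| sp_parallel: "\<lbrakk>series_parallel V E ends; e \<in> E; e' \<notin> E\<rbrakk>
     \<Longrightarrow> series_parallel V (insert e' E) (ends(e' := ends e))"

definition is_path :: "'v set \<Rightarrow> 'e set \<Rightarrow> ('e \<Rightarrow> 'v \<times> 'v) \<Rightarrow> 'v \<Rightarrow> 'v \<Rightarrow> 'e list \<Rightarrow> bool" where
  "is_path V E ends x y es \<longleftrightarrow> (\<exists>vs. length vs = Suc (length es) \<and> vs ! 0 = x \<and>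
     vs ! length es = y \<and> distinct vs \<and> set vs \<subseteq> V \<and>
     (\<forall>i<length es. es ! i \<in> E \<and>
        (ends (es ! i) = (vs ! i, vs ! Suc i) \<or> ends (es ! i) = (vs ! Suc i, vs ! i))))"

definition local_edge_conn :: "'v set \<Rightarrow> 'e set \<Rightarrow> ('e \<Rightarrow> 'v \<times> 'v) \<Rightarrow> 'v \<Rightarrow> 'v \<Rightarrow> nat" where
  "local_edge_conn V E ends x y = Max {k. \<exists>P. length P = k \<and> (\<forall>p\<in>set P. is_path V E ends x y p) \<and>
      (\<forall>i<k. \<forall>j<k. i \<noteq> j \<longrightarrow> set (P ! i) \<inter> set (P ! j) = {})}"

definition maxmaxflow :: "'v set \<Rightarrow> 'e set \<Rightarrow> ('e \<Rightarrow> 'v \<times> 'v) \<Rightarrow> nat" where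
  "maxmaxflow V E ends = (if card V < 2 then 0 else
     Max {local_edge_conn V E ends x y | x y. x \<in> V \<and> y \<in> V \<and> x \<noteq> y})"

definition rho_star :: "nat \<Rightarrow> real" where
  "rho_star L = (if L = 2 then 1 else
     (THE r. 0 < r \<and> r < 1 \<and> (1 + r) ^ L = 2 * (1 + r\<^sup>2) ^ (L - 1)))"

end

theory Submission
  imports Defs "HOL-Library.Transitive_Closure_Table"
begin


definition hfun :: "nat \<Rightarrow> real \<Rightarrow> real" where
  "hfun L r = real L * ln (1 + r) - (real L - 1) * ln (1 + r\<^sup>2)"

definition pfun :: "nat \<Rightarrow> real \<Rightarrow> real" where
  "pfun L r = real L - 2 * (real L - 1) * r - (real L - 2) * r\<^sup>2"

lemma hfun_deriv:
  assumes "r > -1"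
  shows "(hfun L has_real_derivative (pfun L r / ((1 + r) * (1 + r\<^sup>2)))) (at r)"
proof -
  have pos1: "1 + r > 0" using assms by simp
  have pos2: "1 + r\<^sup>2 > 0" by (simp add: add_pos_nonneg)
  have "(hfun L has_real_derivative (real L * (1 / (1 + r)) - (real L - 1) * ((2 * r) / (1 + r\<^sup>2)))) (at r)"
    unfolding hfun_def using pos1 pos2 by (auto intro!: derivative_eq_intros)
  moreover have "real L * (1 / (1 + r)) - (real L - 1) * ((2 * r) / (1 + r\<^sup>2)) = pfun L r / ((1 + r) * (1 + r\<^sup>2))"
    using pos1 pos2 unfolding pfun_def by (simp add: field_simps power2_eq_square)
  ultimately show ?thesis by simp
qed

lemma pfun_strict_decr:
  assumes "L \<ge> 2" "0 \<le> s" "s < t"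
  shows "pfun L t < pfun L s"
proof -
  have "pfun L s - pfun L t = 2 * (real L - 1) * (t - s) + (real L - 2) * (t\<^sup>2 - s\<^sup>2)"
    unfolding pfun_def by (simp add: algebra_simps)
  moreover have "2 * (real L - 1) * (t - s) > 0" using assms by simp
  moreover have "(real L - 2) * (t\<^sup>2 - s\<^sup>2) \<ge> 0"
    using assms by (intro mult_nonneg_nonneg) (auto intro: power_mono)
  ultimately show ?thesis by linarith
qed

lemma sqpos: "1 + (r::real)\<^sup>2 > 0"
  by (intro add_pos_nonneg) auto

lemma hfun_eq_iff:
  assumes "r \<ge> 0" "L \<ge> 1"
  shows "(1 + r) ^ L = 2 * (1 + r\<^sup>2) ^ (L - 1) \<longleftrightarrow> hfun L r = ln 2"
proof -
  note sq = sqpos[of r]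
  have p1: "(1 + r) ^ L > 0" using assms by simp
  have p2: "2 * (1 + r\<^sup>2) ^ (L - 1) > 0" by (simp add: add_pos_nonneg)
  have "(1 + r) ^ L = 2 * (1 + r\<^sup>2) ^ (L - 1) \<longleftrightarrow> ln ((1 + r) ^ L) = ln (2 * (1 + r\<^sup>2) ^ (L - 1))"
    using p1 p2 by simp
  also have "ln ((1 + r) ^ L) = real L * ln (1 + r)" using assms by (simp add: ln_realpow)
  also have "ln (2 * (1 + r\<^sup>2) ^ (L - 1)) = ln 2 + real (L - 1) * ln (1 + r\<^sup>2)"
    by (subst ln_mult) (use sq in \<open>simp_all add: ln_realpow\<close>)
  also have "real (L - 1) = real L - 1" using assms by simp
  finally show ?thesis unfolding hfun_def by linarith
qed

lemma hfun_le_iff: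
  assumes "r \<ge> 0" "L \<ge> 1"
  shows "(1 + r) ^ L \<le> 2 * (1 + r\<^sup>2) ^ (L - 1) \<longleftrightarrow> hfun L r \<le> ln 2"
proof -
  note sq = sqpos[of r]
  have p1: "(1 + r) ^ L > 0" using assms by simp
  have p2: "2 * (1 + r\<^sup>2) ^ (L - 1) > 0" by (simp add: add_pos_nonneg)
  have "(1 + r) ^ L \<le> 2 * (1 + r\<^sup>2) ^ (L - 1) \<longleftrightarrow> ln ((1 + r) ^ L) \<le> ln (2 * (1 + r\<^sup>2) ^ (L - 1))"
    using p1 p2 by simp
  also have "ln ((1 + r) ^ L) = real L * ln (1 + r)" using assms by (simp add: ln_realpow)
  also have "ln (2 * (1 + r\<^sup>2) ^ (L - 1)) = ln 2 + real (L - 1) * ln (1 + r\<^sup>2)"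
    by (subst ln_mult) (use sq in \<open>simp_all add: ln_realpow\<close>)
  also have "real (L - 1) = real L - 1" using assms by simp
  finally show ?thesis unfolding hfun_def by linarith
qed

lemma hfun_cont: "r \<ge> 0 \<Longrightarrow> isCont (hfun L) r"
  using hfun_deriv[of r L] by (intro DERIV_isCont) auto

lemma hfun_0: "hfun L 0 = 0" by (simp add: hfun_def)
lemma hfun_1: "L \<ge> 1 \<Longrightarrow> hfun L 1 = ln 2"
  by (simp add: hfun_def algebra_simps)

lemma hfun_half:
  assumes "L \<ge> 3" shows "hfun L (1/2) > ln 2"
proof -
  have "2 * (1 + (1/2::real)\<^sup>2) ^ (L - 1) < (1 + 1/2) ^ L"
    using assms
  proof (induction L rule: nat_induct_at_least)
    case base then show ?case by (simp add: power2_eq_square eval_nat_numeral)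
  next
    case (Suc n)
    have e1: "(1 + (1/2::real)\<^sup>2) ^ (Suc n - 1) = (5/4) * (1 + (1/2::real)\<^sup>2) ^ (n - 1)"
      using Suc by (cases n) (auto simp: power2_eq_square)
    have "2 * (1 + (1/2::real)\<^sup>2) ^ (Suc n - 1) = (5/4) * (2 * (1 + (1/2::real)\<^sup>2) ^ (n - 1))"
      using e1 by simp
    also have "\<dots> < (5/4) * (1 + 1/2) ^ n" using Suc by simp
    also have "\<dots> \<le> (3/2) * (1 + 1/2) ^ n" by simp
    finally show ?case by simp
  qed
  then have "\<not> ((1 + (1/2::real)) ^ L \<le> 2 * (1 + (1/2)\<^sup>2) ^ (L - 1))" by simp
  then show ?thesis using hfun_le_iff[of "1/2" L] assms by simp
qed

lemma hfun_unique:
  assumes L3: "L \<ge> 3" and r1: "0 < r1" "r1 < 1" "hfun L r1 = ln 2"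
    and r2: "0 < r2" "r2 < 1" "hfun L r2 = ln 2"
  shows "r1 = r2"
proof (rule ccontr)
  assume ne: "r1 \<noteq> r2"
  have main: "False" if a: "0 < a" "a < b" "b < 1" "hfun L a = ln 2" "hfun L b = ln 2" for a b
  proof -
    have D: "\<And>x. 0 \<le> x \<Longrightarrow> (hfun L has_real_derivative (pfun L x / ((1 + x) * (1 + x\<^sup>2)))) (at x)"
      using hfun_deriv by simp
    have M: "\<exists>z. x < z \<and> z < y \<and> hfun L y - hfun L x = (y - x) * (pfun L z / ((1 + z) * (1 + z\<^sup>2)))"
      if "0 \<le> x" "x < y" for x y
    proof (rule MVT2)
      show "x < y" by fact
      show "(hfun L has_real_derivative (pfun L t / ((1 + t) * (1 + t\<^sup>2)))) (at t)" if "x \<le> t" "t \<le> y" for t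
        using D that \<open>0 \<le> x\<close> by auto
    qed
    obtain z2 where z2: "a < z2" "z2 < b" "hfun L b - hfun L a = (b - a) * (pfun L z2 / ((1 + z2) * (1 + z2\<^sup>2)))"
      using M[of a b] a by auto
    obtain z3 where z3: "b < z3" "z3 < 1" "hfun L 1 - hfun L b = (1 - b) * (pfun L z3 / ((1 + z3) * (1 + z3\<^sup>2)))"
      using M[of b 1] a by auto
    have den: "(1 + x) * (1 + x\<^sup>2) > 0" if "0 \<le> x" for x::real using sqpos[of x] that by (intro mult_pos_pos) auto
    have "(b - a) * (pfun L z2 / ((1 + z2) * (1 + z2\<^sup>2))) = 0" using z2 a by simp
    then have "pfun L z2 / ((1 + z2) * (1 + z2\<^sup>2)) = 0" using a by simp
    then have "pfun L z2 = 0" using sqpos[of z2] z2 a by auto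
    moreover have "(1 - b) * (pfun L z3 / ((1 + z3) * (1 + z3\<^sup>2))) = 0" using z3 a hfun_1[of L] L3 by simp
    then have "pfun L z3 / ((1 + z3) * (1 + z3\<^sup>2)) = 0" using a by simp
    then have "pfun L z3 = 0" using sqpos[of z3] z3 a by auto
    moreover have "pfun L z3 < pfun L z2" using pfun_strict_decr[of L z2 z3] L3 z2 z3 a by simp
    ultimately show False by simp
  qed
  show False
  proof (cases "r1 < r2")
    case True then show ?thesis using main[of r1 r2] r1 r2 by simp
  next
    case False then show ?thesis using main[of r2 r1] r1 r2 ne by simp
  qed
qed

lemma rho_star_props:
  assumes L3: "L \<ge> 3"
  shows "0 < rho_star L" "rho_star L < 1"
    "\<And>r. 0 \<le> r \<Longrightarrow> r \<le> rho_star L \<Longrightarrow> (1 + r) ^ L \<le> 2 * (1 + r\<^sup>2) ^ (L - 1)"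
proof -
  define P where "P r \<longleftrightarrow> 0 < r \<and> r < 1 \<and> (1 + r) ^ L = 2 * (1 + r\<^sup>2) ^ (L - 1)" for r :: real
  have PH: "P r \<longleftrightarrow> 0 < r \<and> r < 1 \<and> hfun L r = ln 2" for r
  proof (cases "0 < r")
    case True then show ?thesis unfolding P_def using hfun_eq_iff[of r L] L3 by simp
  qed (simp add: P_def)
  have ivt: "\<exists>x. a \<le> x \<and> x \<le> b \<and> hfun L x = ln 2" if "0 \<le> a" "a \<le> b" "hfun L a \<le> ln 2" "ln 2 \<le> hfun L b" for a b
  proof (rule IVT)
    show "\<forall>x. a \<le> x \<and> x \<le> b \<longrightarrow> isCont (hfun L) x" using hfun_cont that by auto
  qed (use that in auto)
  obtain r0 where r0: "0 \<le> r0" "r0 \<le> 1/2" "hfun L r0 = ln 2"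
    using ivt[of 0 "1/2"] hfun_0[of L] hfun_half[OF L3] by auto
  have "r0 \<noteq> 0" using r0 hfun_0[of L] by auto
  then have Pr0: "P r0" using r0 PH by auto
  have uniq: "r = r0" if "P r" for r
  proof -
    have "0 < r" "r < 1" "hfun L r = ln 2" using that PH by auto
    moreover have "0 < r0" "r0 < 1" "hfun L r0 = ln 2" using Pr0 PH by auto
    ultimately show ?thesis using hfun_unique[OF L3] by blast
  qed
  have L2: "L \<noteq> 2" using L3 by simp
  have "rho_star L = (THE r. 0 < r \<and> r < 1 \<and> (1 + r) ^ L = 2 * (1 + r\<^sup>2) ^ (L - 1))"
    unfolding rho_star_def using L2 by (rule if_not_P)
  also have "\<dots> = (THE r. P r)" by (simp only: P_def)
  finally have "rho_star L = (THE r. P r)" .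
  moreover have "(THE r. P r) = r0" 
  proof (rule the_equality)
    show "P r0" by (rule Pr0)
  next
    fix r assume "P r" then show "r = r0" by (rule uniq)
  qed
  ultimately have eq: "rho_star L = r0" by simp
  show "0 < rho_star L" "rho_star L < 1"
    using Pr0 eq unfolding P_def by auto
  fix r :: real assume r: "0 \<le> r" "r \<le> rho_star L"
  show "(1 + r) ^ L \<le> 2 * (1 + r\<^sup>2) ^ (L - 1)"
  proof (rule ccontr)
    assume "\<not> ?thesis"
    then have h: "hfun L r > ln 2" using hfun_le_iff[of r L] r L3 by simp
    then have "r \<noteq> r0" using r0 by auto
    then have rlt: "r < r0" using r eq by simp
    obtain r1 where r1: "0 \<le> r1" "r1 \<le> r" "hfun L r1 = ln 2"
      using ivt[of 0 r] hfun_0[of L] h r by auto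
    have "r1 \<noteq> 0" using r1 hfun_0[of L] by auto
    then have "P r1" using PH r1 rlt r0 by auto
    then show False using uniq rlt r1 by auto
  qed
qed


lemma adj_insert: "adj (insert e A) ends = insert (ends e) (insert (prod.swap (ends e)) (adj A ends))"
  unfolding adj_def by (cases "ends e") auto

lemma adj_empty[simp]: "adj {} ends = {}"
  unfolding adj_def by auto

lemma adj_cong: "(\<And>e. e \<in> A \<Longrightarrow> ends e = ends' e) \<Longrightarrow> adj A ends = adj A ends'"
  unfolding adj_def by auto

lemma adj_mono: "A \<subseteq> B \<Longrightarrow> adj A ends \<subseteq> adj B ends"
  unfolding adj_def by auto

lemma sym_adj: "sym (adj A ends)"
  unfolding adj_def sym_def by auto

lemma adj_sub: "multigraph V E ends \<Longrightarrow> A \<subseteq> E \<Longrightarrow> adj A ends \<subseteq> V \<times> V"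
  unfolding adj_def multigraph_def by (force)

lemma rt_sym: "sym r \<Longrightarrow> (x, y) \<in> r\<^sup>* \<Longrightarrow> (y, x) \<in> r\<^sup>*"
  using sym_rtrancl[of r] unfolding sym_def by blast

lemma equiv_rt: assumes "sym r" shows "equiv V (r\<^sup>* \<inter> V \<times> V)"
proof -
  have s: "sym (r\<^sup>*)" using assms by (rule sym_rtrancl)
  show ?thesis unfolding equiv_def refl_on_def trans_def using s
    by (auto simp: sym_def intro: rtrancl_trans)
qed

lemma quot_image: "A // r = (\<lambda>x. r `` {x}) ` A"
  unfolding quotient_def by auto

lemma ncomp_adj: "adj A ends = adj A' ends' \<Longrightarrow> ncomp V A ends = ncomp V A' ends'"
  unfolding ncomp_def conn_def by simp

lemma ncard_iso:
  assumes fin: "finite V" and w: "w \<notin> V" and r: "r \<subseteq> V \<times> V"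
  shows "card (insert w V // (r\<^sup>* \<inter> insert w V \<times> insert w V)) = Suc (card (V // (r\<^sup>* \<inter> V \<times> V)))"
proof -
  have wcl: "y = w" if "(w, y) \<in> r\<^sup>*" for y
    using that
  proof (induction rule: rtrancl_induct)
    case (step y z) then show ?case using r w by auto
  qed simp
  have xcl: "y \<in> V" if "(x, y) \<in> r\<^sup>*" "x \<in> V" for x y
    using that
  proof (induction rule: rtrancl_induct)
    case (step y z) then show ?case using r by auto
  qed simp
  define R' where "R' = r\<^sup>* \<inter> insert w V \<times> insert w V"
  define R where "R = r\<^sup>* \<inter> V \<times> V"
  have c1: "R' `` {w} = {w}" unfolding R'_def using wcl by auto
  have c2: "R' `` {x} = R `` {x}" if "x \<in> V" for x
    unfolding R'_def R_def using xcl[OF _ that] that by auto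
  have "insert w V // R' = insert {w} (V // R)"
    unfolding quot_image using c1 c2 by auto
  moreover have "{w} \<notin> V // R"
  proof
    assume "{w} \<in> V // R"
    then obtain x where "x \<in> V" "{w} = R `` {x}" unfolding quot_image by auto
    then have "w \<in> V" unfolding R_def by auto
    then show False using w by simp
  qed
  moreover have "finite (V // R)" unfolding R_def using fin by (intro finite_quotient) auto
  ultimately show ?thesis unfolding R'_def[symmetric] R_def[symmetric] by simp
qed

lemma ncard_kernel:
  assumes f: "f ` V' = W" and iff: "\<And>x y. x \<in> V' \<Longrightarrow> y \<in> V' \<Longrightarrow> (x, y) \<in> R' \<longleftrightarrow> (f x, f y) \<in> R"
    and e1: "equiv V' R'" and e2: "equiv W R"
  shows "card (V' // R') = card (W // R)"
proof -
  have sub1: "R' \<subseteq> V' \<times> V'" using e1 unfolding equiv_def refl_on_def by auto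
  have sub2: "R \<subseteq> W \<times> W" using e2 unfolding equiv_def refl_on_def by auto
  have cl: "f ` (R' `` {x}) = R `` {f x}" if x: "x \<in> V'" for x
  proof
    show "f ` (R' `` {x}) \<subseteq> R `` {f x}"
    proof
      fix z assume "z \<in> f ` (R' `` {x})"
      then obtain y where y: "(x, y) \<in> R'" "z = f y" by auto
      then have "y \<in> V'" using sub1 by auto
      then show "z \<in> R `` {f x}" using iff[OF x] y by auto
    qed
  next
    show "R `` {f x} \<subseteq> f ` (R' `` {x})"
    proof
      fix z assume "z \<in> R `` {f x}"
      then have z: "(f x, z) \<in> R" by auto
      then have "z \<in> W" using sub2 by auto
      then obtain y where y: "y \<in> V'" "z = f y" using f by auto
      then have "(x, y) \<in> R'" using iff[OF x y(1)] z by simp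
      then show "z \<in> f ` (R' `` {x})" using y by auto
    qed
  qed
  have img: "(\<lambda>C. f ` C) ` (V' // R') = W // R"
  proof -
    have "(\<lambda>C. f ` C) ` (V' // R') = (\<lambda>x. R `` {f x}) ` V'"
      unfolding quot_image image_image using cl by (auto simp: image_iff)
    also have "\<dots> = (\<lambda>z. R `` {z}) ` (f ` V')" by (simp add: image_image)
    also have "\<dots> = W // R" using f by (simp add: quot_image)
    finally show ?thesis .
  qed
  have inj: "inj_on (\<lambda>C. f ` C) (V' // R')"
  proof (rule inj_onI)
    fix C1 C2 assume C1: "C1 \<in> V' // R'" and C2: "C2 \<in> V' // R'" and eq: "f ` C1 = f ` C2"
    obtain x1 where x1: "x1 \<in> V'" "C1 = R' `` {x1}" using C1 unfolding quot_image by auto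
    obtain x2 where x2: "x2 \<in> V'" "C2 = R' `` {x2}" using C2 unfolding quot_image by auto
    have "R `` {f x1} = R `` {f x2}" using eq x1 x2 cl by simp
    moreover have "f x2 \<in> W" using f x2 by auto
    ultimately have "(f x1, f x2) \<in> R" using e2 unfolding equiv_def refl_on_def by auto
    then have "(x1, x2) \<in> R'" using iff x1 x2 by auto
    then show "C1 = C2" using x1 x2 equiv_class_eq[OF e1] by simp
  qed
  show ?thesis using card_image[OF inj] img by simp
qed

lemma ncard_contract:
  assumes w: "w \<notin> V" and a: "a \<in> V" and r: "r \<subseteq> V \<times> V" and sr: "sym r" and sr': "sym r'"
    and sub: "r \<subseteq> r'\<^sup>*" and aw: "(a, w) \<in> r'\<^sup>*"
    and step: "\<And>x y. (x, y) \<in> r' \<Longrightarrow> ((if x = w then a else x), (if y = w then a else y)) \<in> r\<^sup>*"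
  shows "card (insert w V // (r'\<^sup>* \<inter> insert w V \<times> insert w V)) = card (V // (r\<^sup>* \<inter> V \<times> V))"
proof -
  define f where "f x = (if x = w then a else x)" for x
  have fwd: "(f x, f y) \<in> r\<^sup>*" if "(x, y) \<in> r'\<^sup>*" for x y
    using that
  proof (induction rule: rtrancl_induct)
    case (step y z)
    then show ?case using step(3) step.hyps(2)[THEN assms(8)] unfolding f_def
      by (meson rtrancl_trans)
  qed simp
  have rr: "r\<^sup>* \<subseteq> r'\<^sup>*" using sub by (simp add: rtrancl_subset_rtrancl)
  have xf: "(x, f x) \<in> r'\<^sup>*" for x using rt_sym[OF sr' aw] unfolding f_def by auto
  have fx: "(f x, x) \<in> r'\<^sup>*" for x using aw unfolding f_def by auto
  have bwd: "(x, y) \<in> r'\<^sup>*" if "(f x, f y) \<in> r\<^sup>*" for x y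
    using xf[of x] rr that fx[of y] by (meson rtrancl_trans subsetD)
  show ?thesis
  proof (rule ncard_kernel[where f = f])
    show "f ` insert w V = V" unfolding f_def using a w by (auto simp: image_iff)
    show "equiv (insert w V) (r'\<^sup>* \<inter> insert w V \<times> insert w V)" by (rule equiv_rt[OF sr'])
    show "equiv V (r\<^sup>* \<inter> V \<times> V)" by (rule equiv_rt[OF sr])
    fix x y assume "x \<in> insert w V" "y \<in> insert w V"
    then have "f x \<in> V" "f y \<in> V" unfolding f_def using a by auto
    then show "((x, y) \<in> r'\<^sup>* \<inter> insert w V \<times> insert w V) = ((f x, f y) \<in> r\<^sup>* \<inter> V \<times> V)"
      using fwd bwd \<open>x \<in> insert w V\<close> \<open>y \<in> insert w V\<close> by auto
  qed
qed

lemma merge_char: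
  assumes sr: "sym r" and "(x, y) \<in> (insert (a, b) (insert (b, a) r))\<^sup>*"
  shows "(x, y) \<in> r\<^sup>* \<or> ((x, a) \<in> r\<^sup>* \<and> (b, y) \<in> r\<^sup>*) \<or> ((x, b) \<in> r\<^sup>* \<and> (a, y) \<in> r\<^sup>*)"
  using assms(2)
proof (induction rule: rtrancl_induct)
  case base then show ?case by simp
next
  case (step y z)
  from step.hyps(2) consider "(y, z) = (a, b)" | "(y, z) = (b, a)" | "(y, z) \<in> r" by auto
  then show ?case
  proof cases
    case 1 then show ?thesis using step.IH rt_sym[OF sr] by (auto intro: rtrancl_trans)
  next
    case 2 then show ?thesis using step.IH rt_sym[OF sr] by (auto intro: rtrancl_trans)
  next
    case 3 then show ?thesis using step.IH by (auto intro: rtrancl_into_rtrancl)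
  qed
qed

lemma ncard_merge:
  assumes fin: "finite V" and r: "r \<subseteq> V \<times> V" and sr: "sym r" and a: "a \<in> V" and b: "b \<in> V"
    and nab: "(a, b) \<notin> r\<^sup>*"
  shows "Suc (card (V // ((insert (a, b) (insert (b, a) r))\<^sup>* \<inter> V \<times> V))) = card (V // (r\<^sup>* \<inter> V \<times> V))"
proof -
  define r2 where "r2 = insert (a, b) (insert (b, a) r)"
  define R where "R = r\<^sup>* \<inter> V \<times> V"
  define R2 where "R2 = r2\<^sup>* \<inter> V \<times> V"
  have sr2: "sym r2" using sr unfolding r2_def sym_def by auto
  have eR: "equiv V R" unfolding R_def by (rule equiv_rt[OF sr])
  have eR2: "equiv V R2" unfolding R2_def by (rule equiv_rt[OF sr2])
  have rr: "r\<^sup>* \<subseteq> r2\<^sup>*" unfolding r2_def by (rule rtrancl_mono) auto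
  have RR2: "R \<subseteq> R2" unfolding R_def R2_def using rr by auto
  define Cb where "Cb = R `` {b}"
  have clb: "R `` {x} = Cb \<longleftrightarrow> (x, b) \<in> r\<^sup>*" if "x \<in> V" for x
    unfolding Cb_def using equiv_class_eq_iff[OF eR, of x b] that b unfolding R_def by auto
  have h: "R2 `` (R `` {x}) = R2 `` {x}" if "x \<in> V" for x
  proof
    show "R2 `` (R `` {x}) \<subseteq> R2 `` {x}"
      using RR2 eR2 unfolding equiv_def trans_def by blast
    show "R2 `` {x} \<subseteq> R2 `` (R `` {x})"
      using that eR unfolding equiv_def refl_on_def by blast
  qed
  have CbQ: "Cb \<in> V // R" unfolding Cb_def quot_image using b by auto
  have surj: "(\<lambda>C. R2 `` C) ` (V // R - {Cb}) = V // R2"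
  proof
    show "(\<lambda>C. R2 `` C) ` (V // R - {Cb}) \<subseteq> V // R2"
      unfolding quot_image using h by auto
  next
    show "V // R2 \<subseteq> (\<lambda>C. R2 `` C) ` (V // R - {Cb})"
    proof
      fix C assume "C \<in> V // R2"
      then obtain x where x: "x \<in> V" "C = R2 `` {x}" unfolding quot_image by auto
      show "C \<in> (\<lambda>C. R2 `` C) ` (V // R - {Cb})"
      proof (cases "R `` {x} = Cb")
        case False
        then have "R `` {x} \<in> V // R - {Cb}" using x unfolding quot_image by auto
        then show ?thesis using x h[of x] by (metis image_eqI)
      next
        case True
        then have "(x, b) \<in> r\<^sup>*" using clb x by simp
        then have "(x, a) \<in> R2" unfolding R2_def using rr x a
          by (metis IntI mem_Sigma_iff r2_def insertI1 insertI2 r_into_rtrancl rtrancl_trans subsetD)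
        then have "R2 `` {x} = R2 `` {a}" using equiv_class_eq[OF eR2] by simp
        moreover have "R `` {a} \<noteq> Cb" using clb[OF a] nab by simp
        then have "R `` {a} \<in> V // R - {Cb}" using a unfolding quot_image by auto
        ultimately show ?thesis using x h[OF a] by (metis image_eqI)
      qed
    qed
  qed
  have inj: "inj_on (\<lambda>C. R2 `` C) (V // R - {Cb})"
  proof (rule inj_onI)
    fix C1 C2 assume C1: "C1 \<in> V // R - {Cb}" and C2: "C2 \<in> V // R - {Cb}" and eq: "R2 `` C1 = R2 `` C2"
    obtain x1 where x1: "x1 \<in> V" "C1 = R `` {x1}" using C1 unfolding quot_image by auto
    obtain x2 where x2: "x2 \<in> V" "C2 = R `` {x2}" using C2 unfolding quot_image by auto
    have n1: "(x1, b) \<notin> r\<^sup>*" using clb[OF x1(1)] C1 x1 by auto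
    have n2: "(x2, b) \<notin> r\<^sup>*" using clb[OF x2(1)] C2 x2 by auto
    have "R2 `` {x1} = R2 `` {x2}" using eq h x1 x2 by simp
    then have "(x1, x2) \<in> R2" using eR2 x2 unfolding equiv_def refl_on_def by auto
    then have "(x1, x2) \<in> r2\<^sup>*" unfolding R2_def by simp
    then have "(x1, x2) \<in> r\<^sup>*" using merge_char[OF sr, of x1 x2 a b] n1 n2 rt_sym[OF sr] unfolding r2_def by blast
    then have "(x1, x2) \<in> R" unfolding R_def using x1 x2 by simp
    then show "C1 = C2" using x1 x2 equiv_class_eq[OF eR] by simp
  qed
  have finQ: "finite (V // R)" unfolding R_def using fin by (intro finite_quotient) auto
  have "card (V // R2) = card (V // R - {Cb})" using card_image[OF inj] surj by simp
  also have "\<dots> = card (V // R) - 1" using CbQ finQ by simp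
  finally have "Suc (card (V // R2)) = card (V // R)"
    using CbQ finQ by (metis Suc_diff_1 card_gt_0_iff empty_iff)
  then show ?thesis unfolding R2_def r2_def R_def .
qed


lemma sum_Pow_split:
  assumes "finite E" "e \<in> E"
  shows "(\<Sum>A\<in>Pow E. g A) = (\<Sum>B\<in>Pow (E - {e}). g B + g (insert e B))"
proof -
  have E: "E = insert e (E - {e})" using assms by auto
  have fin: "finite (Pow (E - {e}))" using assms by simp
  have inj: "inj_on (insert e) (Pow (E - {e}))" by (rule inj_onI) auto
  have disj: "Pow (E - {e}) \<inter> insert e ` Pow (E - {e}) = {}" by auto
  have "(\<Sum>A\<in>Pow E. g A) = (\<Sum>A\<in>Pow (E - {e}) \<union> insert e ` Pow (E - {e}). g A)"
    by (subst E) (simp only: Pow_insert)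
  also have "\<dots> = (\<Sum>A\<in>Pow (E - {e}). g A) + (\<Sum>A\<in>insert e ` Pow (E - {e}). g A)"
    using fin disj by (intro sum.union_disjoint) auto
  also have "(\<Sum>A\<in>insert e ` Pow (E - {e}). g A) = (\<Sum>B\<in>Pow (E - {e}). g (insert e B))"
    using inj by (simp add: sum.reindex)
  finally show ?thesis by (simp add: sum.distrib)
qed

lemma tutteZ_split:
  assumes "finite E" "e \<in> E"
  shows "tutteZ V E ends q v = (\<Sum>B\<in>Pow (E - {e}). (\<Prod>f\<in>B. v f) *
           (q ^ ncomp V B ends + v e * q ^ ncomp V (insert e B) ends))"
proof -
  have "tutteZ V E ends q v = (\<Sum>B\<in>Pow (E - {e}). q ^ ncomp V B ends * (\<Prod>f\<in>B. v f) +
          q ^ ncomp V (insert e B) ends * (\<Prod>f\<in>insert e B. v f))"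
    unfolding tutteZ_def by (rule sum_Pow_split[OF assms])
  also have "\<dots> = (\<Sum>B\<in>Pow (E - {e}). (\<Prod>f\<in>B. v f) *
           (q ^ ncomp V B ends + v e * q ^ ncomp V (insert e B) ends))"
  proof (rule sum.cong)
    fix B assume "B \<in> Pow (E - {e})"
    then have "finite B" "e \<notin> B" using assms finite_subset by auto
    then show "q ^ ncomp V B ends * (\<Prod>f\<in>B. v f) + q ^ ncomp V (insert e B) ends * (\<Prod>f\<in>insert e B. v f) =
      (\<Prod>f\<in>B. v f) * (q ^ ncomp V B ends + v e * q ^ ncomp V (insert e B) ends)"
      by (simp add: algebra_simps)
  qed simp
  finally show ?thesis .
qed

lemma Z_par:
  assumes fin: "finite E" and e: "e \<in> E" and e': "e' \<notin> E"
  shows "tutteZ V (insert e' E) (ends(e' := ends e)) q v = tutteZ V E ends q (v(e := v e + v e' + v e * v e'))"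
proof -
  define ends' where "ends' = ends(e' := ends e)"
  define c where "c B = ncomp V B ends" for B
  have ee: "e \<noteq> e'" using e e' by auto
  have c1: "ncomp V B ends' = c B" if "B \<subseteq> E - {e}" for B
    unfolding c_def ends'_def using that e' by (intro ncomp_adj adj_cong) auto
  have c2: "ncomp V (insert e' B) ends' = c (insert e B)" if "B \<subseteq> E - {e}" for B
  proof -
    have "adj B ends' = adj B ends" unfolding ends'_def using that e' by (intro adj_cong) auto
    then show ?thesis unfolding c_def by (intro ncomp_adj) (simp add: adj_insert ends'_def)
  qed
  have c3: "ncomp V (insert e B) ends' = c (insert e B)" if "B \<subseteq> E - {e}" for B
    unfolding c_def ends'_def using that e' ee by (intro ncomp_adj adj_cong) auto
  have c4: "ncomp V (insert e' (insert e B)) ends' = c (insert e B)" if "B \<subseteq> E - {e}" for B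
  proof -
    have "adj B ends' = adj B ends" unfolding ends'_def using that e' by (intro adj_cong) auto
    then show ?thesis unfolding c_def by (intro ncomp_adj) (auto simp add: adj_insert ends'_def ee)
  qed
  have "tutteZ V (insert e' E) ends' q v = (\<Sum>A\<in>Pow E. (\<Prod>f\<in>A. v f) *
           (q ^ ncomp V A ends' + v e' * q ^ ncomp V (insert e' A) ends'))"
    using tutteZ_split[of "insert e' E" e' V ends' q v] fin e' by simp
  also have "\<dots> = (\<Sum>B\<in>Pow (E - {e}). (\<Prod>f\<in>B. v f) *
           (q ^ ncomp V B ends' + v e' * q ^ ncomp V (insert e' B) ends') +
           (\<Prod>f\<in>insert e B. v f) *
           (q ^ ncomp V (insert e B) ends' + v e' * q ^ ncomp V (insert e' (insert e B)) ends'))"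
    by (rule sum_Pow_split[OF fin e])
  also have "\<dots> = (\<Sum>B\<in>Pow (E - {e}). (\<Prod>f\<in>B. v f) *
           (q ^ c B + (v e + v e' + v e * v e') * q ^ c (insert e B)))"
  proof (rule sum.cong)
    fix B assume B: "B \<in> Pow (E - {e})"
    then have "finite B" "e \<notin> B" using fin finite_subset by auto
    then show "(\<Prod>f\<in>B. v f) * (q ^ ncomp V B ends' + v e' * q ^ ncomp V (insert e' B) ends') +
           (\<Prod>f\<in>insert e B. v f) *
           (q ^ ncomp V (insert e B) ends' + v e' * q ^ ncomp V (insert e' (insert e B)) ends') =
          (\<Prod>f\<in>B. v f) * (q ^ c B + (v e + v e' + v e * v e') * q ^ c (insert e B))"
      using c1 c2 c3 c4 B by (simp add: algebra_simps)
  qed simp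
  also have "\<dots> = tutteZ V E ends q (v(e := v e + v e' + v e * v e'))"
  proof -
    have "tutteZ V E ends q (v(e := v e + v e' + v e * v e')) = (\<Sum>B\<in>Pow (E - {e}). (\<Prod>f\<in>B. (v(e := v e + v e' + v e * v e')) f) *
           (q ^ c B + (v e + v e' + v e * v e') * q ^ c (insert e B)))"
      unfolding c_def by (rule trans[OF tutteZ_split[OF fin e]]) simp
    also have "\<dots> = (\<Sum>B\<in>Pow (E - {e}). (\<Prod>f\<in>B. v f) *
           (q ^ c B + (v e + v e' + v e * v e') * q ^ c (insert e B)))"
    proof (rule sum.cong)
      fix B assume "B \<in> Pow (E - {e})"
      then have "(\<Prod>f\<in>B. (v(e := v e + v e' + v e * v e')) f) = (\<Prod>f\<in>B. v f)"
        by (intro prod.cong) auto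
      then show "(\<Prod>f\<in>B. (v(e := v e + v e' + v e * v e')) f) * (q ^ c B + (v e + v e' + v e * v e') * q ^ c (insert e B)) =
        (\<Prod>f\<in>B. v f) * (q ^ c B + (v e + v e' + v e * v e') * q ^ c (insert e B))" by simp
    qed simp
    finally show ?thesis by simp
  qed
  finally show ?thesis unfolding ends'_def .
qed

lemma sym_ins2: "sym r \<Longrightarrow> sym (insert (x, y) (insert (y, x) r))"
  unfolding sym_def by auto

lemma Z_ser:
  assumes mg: "multigraph V E ends" and e: "e \<in> E" and ab: "ends e = (a, b)" and w: "w \<notin> V" and e': "e' \<notin> E"
  shows "tutteZ (insert w V) (insert e' E) (ends(e := (a, w), e' := (w, b))) q v =
    (\<Sum>B\<in>Pow (E - {e}). (\<Prod>f\<in>B. v f) * (q ^ ncomp V B ends * (q + v e + v e') + v e * v e' * q ^ ncomp V (insert e B) ends))"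
proof -
  define ends' where "ends' = ends(e := (a, w), e' := (w, b))"
  define V' where "V' = insert w V"
  have fin: "finite E" "finite V" using mg unfolding multigraph_def by auto
  have aV: "a \<in> V" and bV: "b \<in> V" using mg e ab unfolding multigraph_def by force+
  have ee: "e \<noteq> e'" using e e' by auto
  have aw: "a \<noteq> w" "b \<noteq> w" using aV bV w by auto
  have ends'e: "ends' e = (a, w)" and ends'e': "ends' e' = (w, b)" unfolding ends'_def using ee by auto
  have d: "ncomp V' B ends' = Suc (ncomp V B ends) \<and>
      ncomp V' (insert e B) ends' = ncomp V B ends \<and>
      ncomp V' (insert e' B) ends' = ncomp V B ends \<and>
      ncomp V' (insert e' (insert e B)) ends' = ncomp V (insert e B) ends" if B: "B \<subseteq> E - {e}" for B
  proof -
    define r where "r = adj B ends"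
    have r: "r \<subseteq> V \<times> V" unfolding r_def using adj_sub[OF mg] B by auto
    have sr: "sym r" unfolding r_def by (rule sym_adj)
    have adjB: "adj B ends' = r" unfolding r_def ends'_def using B e' by (intro adj_cong) auto
    have rV: "x \<noteq> w" "y \<noteq> w" if "(x, y) \<in> r" for x y using that r w by auto
    have d1: "ncomp V' B ends' = Suc (ncomp V B ends)"
      unfolding ncomp_def conn_def V'_def adjB using ncard_iso[OF fin(2) w r] r_def by simp
    have d2: "ncomp V' (insert e B) ends' = ncomp V B ends"
    proof -
      have "adj (insert e B) ends' = insert (a, w) (insert (w, a) r)" using adjB ends'e by (simp add: adj_insert)
      moreover have "card (insert w V // ((insert (a, w) (insert (w, a) r))\<^sup>* \<inter> insert w V \<times> insert w V)) = card (V // (r\<^sup>* \<inter> V \<times> V))"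
      proof (rule ncard_contract[OF w aV r sr sym_ins2[OF sr]])
        show "r \<subseteq> (insert (a, w) (insert (w, a) r))\<^sup>*" by auto
        show "(a, w) \<in> (insert (a, w) (insert (w, a) r))\<^sup>*" by auto
        fix x y assume "(x, y) \<in> insert (a, w) (insert (w, a) r)"
        then show "(if x = w then a else x, if y = w then a else y) \<in> r\<^sup>*" using rV aw by auto
      qed
      ultimately show ?thesis unfolding ncomp_def conn_def V'_def r_def by simp
    qed
    have d3: "ncomp V' (insert e' B) ends' = ncomp V B ends"
    proof -
      have "adj (insert e' B) ends' = insert (w, b) (insert (b, w) r)" using adjB ends'e' by (simp add: adj_insert)
      also have "\<dots> = insert (b, w) (insert (w, b) r)" by auto
      finally have eq: "adj (insert e' B) ends' = insert (b, w) (insert (w, b) r)" .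
      have "card (insert w V // ((insert (b, w) (insert (w, b) r))\<^sup>* \<inter> insert w V \<times> insert w V)) = card (V // (r\<^sup>* \<inter> V \<times> V))"
      proof (rule ncard_contract[OF w bV r sr sym_ins2[OF sr]])
        show "r \<subseteq> (insert (b, w) (insert (w, b) r))\<^sup>*" by auto
        show "(b, w) \<in> (insert (b, w) (insert (w, b) r))\<^sup>*" by auto
        fix x y assume "(x, y) \<in> insert (b, w) (insert (w, b) r)"
        then show "(if x = w then b else x, if y = w then b else y) \<in> r\<^sup>*" using rV aw by auto
      qed
      then show ?thesis using eq unfolding ncomp_def conn_def V'_def r_def by simp
    qed
    have d4: "ncomp V' (insert e' (insert e B)) ends' = ncomp V (insert e B) ends"
    proof -
      define r' where "r' = insert (a, w) (insert (w, a) (insert (w, b) (insert (b, w) r)))"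
      define r2 where "r2 = insert (a, b) (insert (b, a) r)"
      have eq1: "adj (insert e' (insert e B)) ends' = r'" using adjB ends'e ends'e' unfolding r'_def
        by (auto simp add: adj_insert)
      have eq2: "adj (insert e B) ends = r2" unfolding r2_def r_def using ab by (simp add: adj_insert)
      have r2: "r2 \<subseteq> V \<times> V" unfolding r2_def using r aV bV by auto
      have "card (insert w V // (r'\<^sup>* \<inter> insert w V \<times> insert w V)) = card (V // (r2\<^sup>* \<inter> V \<times> V))"
      proof (rule ncard_contract[OF w aV r2])
        show "sym r2" unfolding r2_def by (rule sym_ins2[OF sr])
        show "sym r'" unfolding r'_def by (intro sym_ins2 sr)
        have "(a, b) \<in> r'\<^sup>*" unfolding r'_def
          by (meson insertCI r_into_rtrancl rtrancl_trans)
        moreover have "(b, a) \<in> r'\<^sup>*" unfolding r'_def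
          by (meson insertCI r_into_rtrancl rtrancl_trans)
        ultimately show "r2 \<subseteq> r'\<^sup>*" unfolding r2_def r'_def by auto
        show "(a, w) \<in> r'\<^sup>*" unfolding r'_def by auto
        fix x y assume "(x, y) \<in> r'"
        then show "(if x = w then a else x, if y = w then a else y) \<in> r2\<^sup>*"
          unfolding r'_def r2_def using rV aw by auto
      qed
      then show ?thesis using eq1 eq2 unfolding ncomp_def conn_def V'_def by simp
    qed
    show ?thesis using d1 d2 d3 d4 by simp
  qed
  have "tutteZ V' (insert e' E) ends' q v = (\<Sum>A\<in>Pow E. (\<Prod>f\<in>A. v f) *
           (q ^ ncomp V' A ends' + v e' * q ^ ncomp V' (insert e' A) ends'))"
    using tutteZ_split[of "insert e' E" e' V' ends' q v] fin e' by simp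
  also have "\<dots> = (\<Sum>B\<in>Pow (E - {e}). (\<Prod>f\<in>B. v f) *
           (q ^ ncomp V' B ends' + v e' * q ^ ncomp V' (insert e' B) ends') +
           (\<Prod>f\<in>insert e B. v f) *
           (q ^ ncomp V' (insert e B) ends' + v e' * q ^ ncomp V' (insert e' (insert e B)) ends'))"
    by (rule sum_Pow_split[OF fin(1) e])
  also have "\<dots> = (\<Sum>B\<in>Pow (E - {e}). (\<Prod>f\<in>B. v f) * (q ^ ncomp V B ends * (q + v e + v e') + v e * v e' * q ^ ncomp V (insert e B) ends))"
  proof (rule sum.cong)
    fix B assume B: "B \<in> Pow (E - {e})"
    then have "finite B" "e \<notin> B" using fin finite_subset by auto
    then show "(\<Prod>f\<in>B. v f) * (q ^ ncomp V' B ends' + v e' * q ^ ncomp V' (insert e' B) ends') +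
           (\<Prod>f\<in>insert e B. v f) *
           (q ^ ncomp V' (insert e B) ends' + v e' * q ^ ncomp V' (insert e' (insert e B)) ends') =
          (\<Prod>f\<in>B. v f) * (q ^ ncomp V B ends * (q + v e + v e') + v e * v e' * q ^ ncomp V (insert e B) ends)"
      using d[of B] B by (simp add: algebra_simps)
  qed simp
  finally show ?thesis unfolding ends'_def V'_def .
qed

lemma Z_bridge_terms:
  assumes mg: "multigraph V E ends" and e: "e \<in> E" and ab: "ends e = (a, b)"
    and br: "(a, b) \<notin> conn V (E - {e}) ends" and B: "B \<subseteq> E - {e}"
  shows "ncomp V B ends = Suc (ncomp V (insert e B) ends)"
proof -
  have fin: "finite V" using mg unfolding multigraph_def by auto
  have aV: "a \<in> V" and bV: "b \<in> V" using mg e ab unfolding multigraph_def by force+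
  define r where "r = adj B ends"
  have r: "r \<subseteq> V \<times> V" unfolding r_def using adj_sub[OF mg] B by auto
  have sr: "sym r" unfolding r_def by (rule sym_adj)
  have "(adj B ends)\<^sup>* \<subseteq> (adj (E - {e}) ends)\<^sup>*" using B by (intro rtrancl_mono adj_mono)
  then have nab: "(a, b) \<notin> r\<^sup>*" using br aV bV unfolding conn_def r_def by auto
  have "adj (insert e B) ends = insert (a, b) (insert (b, a) r)" unfolding r_def using ab by (simp add: adj_insert)
  then show ?thesis using ncard_merge[OF fin r sr aV bV nab] unfolding ncomp_def conn_def r_def by simp
qed

lemma forest_sub: "forest V E ends \<Longrightarrow> forest V (E - {e}) ends"
  unfolding forest_def multigraph_def
proof (intro conjI ballI; (elim conjE)?)
  fix f assume H: "\<forall>e\<in>E. (fst (ends e), snd (ends e)) \<notin> conn V (E - {e}) ends" and f: "f \<in> E - {e}"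
  have "conn V (E - {e} - {f}) ends \<subseteq> conn V (E - {f}) ends"
    unfolding conn_def by (intro Int_mono rtrancl_mono adj_mono) auto
  then show "(fst (ends f), snd (ends f)) \<notin> conn V (E - {e} - {f}) ends" using H f by auto
qed auto

lemma forest_Z:
  assumes "forest V E ends" "q \<noteq> 0" "\<forall>e\<in>E. q + v e \<noteq> 0"
  shows "tutteZ V E ends q v \<noteq> 0"
  using assms
proof (induction "card E" arbitrary: E)
  case 0
  then have "E = {}" using assms unfolding forest_def multigraph_def by auto
  then show ?case using 0 unfolding tutteZ_def by simp
next
  case (Suc n)
  have mg: "multigraph V E ends" using Suc.prems unfolding forest_def by auto
  then have fin: "finite E" unfolding multigraph_def by auto
  obtain e where e: "e \<in> E" using Suc.hyps(2) by (metis card.empty ex_in_conv nat.simps(3))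
  obtain a b where ab: "ends e = (a, b)" by (cases "ends e")
  have br: "(a, b) \<notin> conn V (E - {e}) ends" using Suc.prems(1) e ab unfolding forest_def by force
  have IH: "tutteZ V (E - {e}) ends q v \<noteq> 0"
    using Suc.hyps(1)[of "E - {e}"] Suc.hyps(2) e fin forest_sub[OF Suc.prems(1)] Suc.prems by auto
  define S where "S = (\<Sum>B\<in>Pow (E - {e}). (\<Prod>f\<in>B. v f) * q ^ ncomp V (insert e B) ends)"
  have Z1: "tutteZ V E ends q v = (q + v e) * S"
    unfolding tutteZ_split[OF fin e] S_def sum_distrib_left
    by (rule sum.cong) (use Z_bridge_terms[OF mg e ab br] in \<open>auto simp: algebra_simps\<close>)
  have Z2: "tutteZ V (E - {e}) ends q v = q * S"
    unfolding tutteZ_def S_def sum_distrib_left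
    by (rule sum.cong) (use Z_bridge_terms[OF mg e ab br] in \<open>auto simp: algebra_simps\<close>)
  show ?case using Z1 Z2 IH Suc.prems e by auto
qed


definition Ek :: "'e set \<Rightarrow> ('e \<Rightarrow> nat) \<Rightarrow> ('e \<times> nat) set" where
  "Ek E k = {(e, i). e \<in> E \<and> i < k e}"

definition fam :: "'f set \<Rightarrow> ('f \<Rightarrow> 'v \<times> 'v) \<Rightarrow> 'v \<Rightarrow> 'v \<Rightarrow> nat \<Rightarrow> bool" where
  "fam E ends x y n \<longleftrightarrow> (\<exists>S. (\<forall>i<n. S i \<subseteq> E \<and> (x, y) \<in> (adj (S i) ends)\<^sup>*) \<and>
      (\<forall>i<n. \<forall>j<n. i \<noteq> j \<longrightarrow> S i \<inter> S j = {}))"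

definition flowok :: "nat \<Rightarrow> 'v set \<Rightarrow> 'e set \<Rightarrow> ('e \<Rightarrow> 'v \<times> 'v) \<Rightarrow> ('e \<Rightarrow> nat) \<Rightarrow> bool" where
  "flowok L V E ends k \<longleftrightarrow> (\<forall>x\<in>V. \<forall>y\<in>V. x \<noteq> y \<longrightarrow> \<not> fam (Ek E k) (ends \<circ> fst) x y (Suc L))"

lemma fam_transfer:
  assumes F: "fam E1 ends1 x y n"
    and sub: "\<And>f. f \<in> E1 \<Longrightarrow> g f \<subseteq> E2"
    and con: "\<And>f. f \<in> E1 \<Longrightarrow> ends1 f \<in> (adj (g f) ends2)\<^sup>*"
    and dis: "\<And>f1 f2. f1 \<in> E1 \<Longrightarrow> f2 \<in> E1 \<Longrightarrow> f1 \<noteq> f2 \<Longrightarrow> g f1 \<inter> g f2 = {}"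
  shows "fam E2 ends2 x y n"
proof -
  obtain S where S: "\<forall>i<n. S i \<subseteq> E1 \<and> (x, y) \<in> (adj (S i) ends1)\<^sup>*"
    "\<forall>i<n. \<forall>j<n. i \<noteq> j \<longrightarrow> S i \<inter> S j = {}" using F unfolding fam_def by blast
  define S' where "S' i = \<Union>(g ` S i)" for i
  show ?thesis unfolding fam_def
  proof (intro exI[of _ S'] conjI allI impI)
    fix i assume i: "i < n"
    show "S' i \<subseteq> E2" using S i sub unfolding S'_def by blast
    have "adj (S i) ends1 \<subseteq> (adj (S' i) ends2)\<^sup>*"
    proof (rule subrelI)
      fix u w assume "(u, w) \<in> adj (S i) ends1"
      then obtain f where f: "f \<in> S i" "ends1 f = (u, w) \<or> ends1 f = (w, u)" unfolding adj_def by auto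
      have "adj (g f) ends2 \<subseteq> adj (S' i) ends2" using f unfolding S'_def by (intro adj_mono) auto
      then have "ends1 f \<in> (adj (S' i) ends2)\<^sup>*" using con[of f] f S i by (meson rtrancl_mono subsetD)
      then show "(u, w) \<in> (adj (S' i) ends2)\<^sup>*" using f(2) rt_sym[OF sym_adj] by auto
    qed
    then show "(x, y) \<in> (adj (S' i) ends2)\<^sup>*" using S i by (meson rtrancl_subset_rtrancl subsetD)
  next
    fix i j assume "i < n" "j < n" "i \<noteq> j"
    then have "S i \<inter> S j = {}" using S by auto
    then show "S' i \<inter> S' j = {}" unfolding S'_def using dis S \<open>i < n\<close> \<open>j < n\<close> by blast
  qed
qed

lemma nonbridge_cap:
  assumes mg: "multigraph V E ends" and ll: "loopless E ends" and fl: "flowok L V E ends k"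
    and k1: "\<forall>f\<in>E. 1 \<le> k f" and e: "e \<in> E"
    and nb: "(fst (ends e), snd (ends e)) \<in> conn V (E - {e}) ends"
  shows "k e < L"
proof (rule ccontr)
  assume "\<not> k e < L"
  then have kL: "L \<le> k e" by simp
  define a where "a = fst (ends e)"
  define b where "b = snd (ends e)"
  have ab: "ends e = (a, b)" unfolding a_def b_def by simp
  have aV: "a \<in> V" and bV: "b \<in> V" and anb: "a \<noteq> b"
    using mg ll e unfolding multigraph_def loopless_def a_def b_def by auto
  define S where "S i = (if i < L then {(e, i)} else Ek (E - {e}) k)" for i
  have "fam (Ek E k) (ends \<circ> fst) a b (Suc L)" unfolding fam_def
  proof (intro exI[of _ S] conjI allI impI)
    fix i assume i: "i < Suc L"
    show "S i \<subseteq> Ek E k" unfolding S_def Ek_def using kL e by auto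
    show "(a, b) \<in> (adj (S i) (ends \<circ> fst))\<^sup>*"
    proof (cases "i < L")
      case True
      then have "(a, b) \<in> adj (S i) (ends \<circ> fst)" unfolding S_def adj_def using ab by auto
      then show ?thesis by auto
    next
      case False
      have "adj (E - {e}) ends \<subseteq> adj (S i) (ends \<circ> fst)"
      proof (rule subrelI)
        fix u w assume "(u, w) \<in> adj (E - {e}) ends"
        then obtain f where f: "f \<in> E - {e}" "ends f = (u, w) \<or> ends f = (w, u)" unfolding adj_def by auto
        then have "(f, 0) \<in> S i" unfolding S_def Ek_def using False k1 by force
        then show "(u, w) \<in> adj (S i) (ends \<circ> fst)" using f unfolding adj_def by force
      qed
      then have "(adj (E - {e}) ends)\<^sup>* \<subseteq> (adj (S i) (ends \<circ> fst))\<^sup>*" by (rule rtrancl_mono)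
      then show ?thesis using nb unfolding conn_def a_def b_def by auto
    qed
  next
    fix i j assume "i < Suc L" "j < Suc L" "i \<noteq> j"
    then show "S i \<inter> S j = {}" unfolding S_def Ek_def by auto
  qed
  then show False using fl aV bV anb unfolding flowok_def by auto
qed

lemma rp_to_path:
  assumes "rtrancl_path R x xs y" and R: "R = (\<lambda>a b. (a, b) \<in> adj S ends)"
    and x: "x \<in> V" and S: "S \<subseteq> E" and mg: "multigraph V E ends"
  shows "\<exists>es. length es = length xs \<and> set es \<subseteq> S \<and>
     (\<forall>i<length es. ends (es ! i) = ((x # xs) ! i, (x # xs) ! Suc i) \<or> ends (es ! i) = ((x # xs) ! Suc i, (x # xs) ! i)) \<and>
     set (x # xs) \<subseteq> V \<and> last (x # xs) = y"
  using assms(1) x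
proof (induction rule: rtrancl_path.induct)
  case (base x) then show ?case by auto
next
  case (step x z ys y)
  have "(x, z) \<in> adj S ends" using step.hyps(1) R by simp
  then obtain f where f: "f \<in> S" "ends f = (x, z) \<or> ends f = (z, x)" unfolding adj_def by auto
  have zV: "z \<in> V" using \<open>(x, z) \<in> adj S ends\<close> adj_sub[OF mg S] by auto
  obtain es where es: "length es = length ys" "set es \<subseteq> S"
    "\<forall>i<length es. ends (es ! i) = ((z # ys) ! i, (z # ys) ! Suc i) \<or> ends (es ! i) = ((z # ys) ! Suc i, (z # ys) ! i)"
    "set (z # ys) \<subseteq> V" "last (z # ys) = y" using step.IH zV by blast
  show ?case
  proof (intro exI[of _ "f # es"] conjI)
    show "\<forall>i<length (f # es). ends ((f # es) ! i) = ((x # z # ys) ! i, (x # z # ys) ! Suc i) \<or>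
        ends ((f # es) ! i) = ((x # z # ys) ! Suc i, (x # z # ys) ! i)"
    proof (intro allI impI)
      fix i assume "i < length (f # es)"
      then show "ends ((f # es) ! i) = ((x # z # ys) ! i, (x # z # ys) ! Suc i) \<or>
        ends ((f # es) ! i) = ((x # z # ys) ! Suc i, (x # z # ys) ! i)"
        using f es(3) by (cases i) auto
    qed
  qed (use es f step.prems in auto)
qed

lemma path_exists:
  assumes mg: "multigraph V E ends" and S: "S \<subseteq> E" and x: "x \<in> V" and xy: "x \<noteq> y"
    and c: "(x, y) \<in> (adj S ends)\<^sup>*"
  shows "\<exists>es. is_path V E ends x y es \<and> set es \<subseteq> S"
proof -
  have "(\<lambda>a b. (a, b) \<in> adj S ends)\<^sup>*\<^sup>* x y" using c by (simp add: rtranclp_rtrancl_eq)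
  then obtain xs where "rtrancl_path (\<lambda>a b. (a, b) \<in> adj S ends) x xs y"
    by (auto simp: rtranclp_eq_rtrancl_path)
  then obtain xs' where p: "rtrancl_path (\<lambda>a b. (a, b) \<in> adj S ends) x xs' y" and d: "distinct (x # xs')"
    by (rule rtrancl_path_distinct)
  obtain es where es: "length es = length xs'" "set es \<subseteq> S"
     "\<forall>i<length es. ends (es ! i) = ((x # xs') ! i, (x # xs') ! Suc i) \<or> ends (es ! i) = ((x # xs') ! Suc i, (x # xs') ! i)"
     "set (x # xs') \<subseteq> V" "last (x # xs') = y"
    using rp_to_path[OF p refl x S mg] by blast
  have "(x # xs') ! length es = y" using es(1) es(5) last_conv_nth[of "x # xs'"] by simp
  moreover have "es ! i \<in> E" if "i < length es" for i using that es(2) S by (meson nth_mem subsetD)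
  ultimately have "is_path V E ends x y es"
    unfolding is_path_def using es d by (intro exI[of _ "x # xs'"]) auto
  then show ?thesis using es by blast
qed

lemma path_nonempty: "is_path V E ends x y es \<Longrightarrow> x \<noteq> y \<Longrightarrow> es \<noteq> []"
  unfolding is_path_def by auto

lemma path_sub: "is_path V E ends x y es \<Longrightarrow> set es \<subseteq> E"
  unfolding is_path_def by (auto simp: in_set_conv_nth)

lemma fam_bound:
  assumes xy: "x \<noteq> y" and fin: "finite E" and len: "length P = k"
    and paths: "\<forall>p\<in>set P. is_path V E ends x y p"
    and dis: "\<forall>i<k. \<forall>j<k. i \<noteq> j \<longrightarrow> set (P ! i) \<inter> set (P ! j) = {}"
  shows "k \<le> card E"
proof -
  have pi: "is_path V E ends x y (P ! i)" if "i < k" for i using paths len that by auto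
  have "card (\<Union>i\<in>{..<k}. set (P ! i)) = (\<Sum>i\<in>{..<k}. card (set (P ! i)))"
    using dis by (intro card_UN_disjoint) auto
  also have "\<dots> \<ge> (\<Sum>i\<in>{..<k}. 1)"
    using path_nonempty[OF pi xy] by (intro sum_mono) (auto simp: Suc_le_eq card_gt_0_iff)
  moreover have "card (\<Union>i\<in>{..<k}. set (P ! i)) \<le> card E"
    using path_sub[OF pi] fin by (intro card_mono) auto
  ultimately show ?thesis by simp
qed

lemma flow_init:
  assumes mg: "multigraph V E ends" and mm: "maxmaxflow V E ends \<le> L"
  shows "flowok L V E ends (\<lambda>_. 1)"
  unfolding flowok_def
proof (intro ballI impI notI)
  fix x y assume x: "x \<in> V" and y: "y \<in> V" and xy: "x \<noteq> y"
  assume "fam (Ek E (\<lambda>_. 1)) (ends \<circ> fst) x y (Suc L)"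
  then obtain S where S: "\<forall>i<Suc L. S i \<subseteq> Ek E (\<lambda>_. 1) \<and> (x, y) \<in> (adj (S i) (ends \<circ> fst))\<^sup>*"
    "\<forall>i<Suc L. \<forall>j<Suc L. i \<noteq> j \<longrightarrow> S i \<inter> S j = {}" unfolding fam_def by blast
  have fin: "finite E" "finite V" using mg unfolding multigraph_def by auto
  define T where "T i = fst ` S i" for i
  have TE: "T i \<subseteq> E" if "i < Suc L" for i using S that unfolding T_def Ek_def by force
  have adjT: "adj (S i) (ends \<circ> fst) = adj (T i) ends" for i unfolding adj_def T_def by force
  have Tdis: "T i \<inter> T j = {}" if "i < Suc L" "j < Suc L" "i \<noteq> j" for i j
  proof -
    have "S i \<inter> S j = {}" using S that by auto
    moreover have "S i \<subseteq> E \<times> {0}" "S j \<subseteq> E \<times> {0}" using S that unfolding Ek_def by auto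
    ultimately show ?thesis unfolding T_def by fastforce
  qed
  have "\<forall>i\<in>{..<Suc L}. \<exists>es. is_path V E ends x y es \<and> set es \<subseteq> T i"
    using path_exists[OF mg TE x xy] S adjT by auto
  then obtain p where p: "\<forall>i\<in>{..<Suc L}. is_path V E ends x y (p i) \<and> set (p i) \<subseteq> T i"
    by metis
  define P where "P = map p [0..<Suc L]"
  define K where "K = {k. \<exists>P. length P = k \<and> (\<forall>p\<in>set P. is_path V E ends x y p) \<and>
      (\<forall>i<k. \<forall>j<k. i \<noteq> j \<longrightarrow> set (P ! i) \<inter> set (P ! j) = {})}"
  have "Suc L \<in> K" unfolding K_def
  proof (intro CollectI exI[of _ P] conjI)
    show "length P = Suc L" unfolding P_def by simp
    show "\<forall>pa\<in>set P. is_path V E ends x y pa" unfolding P_def using p by auto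
    show "\<forall>i<Suc L. \<forall>j<Suc L. i \<noteq> j \<longrightarrow> set (P ! i) \<inter> set (P ! j) = {}"
    proof (intro allI impI)
      fix i j assume "i < Suc L" "j < Suc L" "i \<noteq> j"
      then show "set (P ! i) \<inter> set (P ! j) = {}" unfolding P_def using p Tdis[of i j]
        by (simp del: upt_Suc) blast
    qed
  qed
  moreover have "K \<subseteq> {..card E}" unfolding K_def using fam_bound[OF xy fin(1)] by auto
  then have "finite K" using finite_subset by blast
  ultimately have lc: "Suc L \<le> local_edge_conn V E ends x y"
    unfolding local_edge_conn_def K_def[symmetric] by (simp add: Max_ge)
  have "card {x, y} \<le> card V" using x y fin by (intro card_mono) auto
  then have cV: "\<not> card V < 2" using xy by simp
  have "finite {local_edge_conn V E ends x y |x y. x \<in> V \<and> y \<in> V \<and> x \<noteq> y}"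
  proof -
    have "{local_edge_conn V E ends x y |x y. x \<in> V \<and> y \<in> V \<and> x \<noteq> y} \<subseteq> (\<lambda>(x, y). local_edge_conn V E ends x y) ` (V \<times> V)"
      by auto
    then show ?thesis using fin by (meson finite_SigmaI finite_imageI finite_subset)
  qed
  then have "local_edge_conn V E ends x y \<le> maxmaxflow V E ends"
    unfolding maxmaxflow_def using cV x y xy by (auto intro!: Max_ge)
  then show False using lc mm by simp
qed


definition inA :: "complex \<Rightarrow> real \<Rightarrow> complex \<Rightarrow> bool" where
  "inA q \<beta> y \<longleftrightarrow> y + (q - 1) \<noteq> 0 \<and> cmod ((y - 1) / (y + (q - 1))) \<le> \<beta>"

definition bfun :: "real \<Rightarrow> real \<Rightarrow> real" where
  "bfun R Y = (Y - 1) / (R - Y)"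

lemma inA_mono: "inA q \<beta> y \<Longrightarrow> \<beta> \<le> \<beta>' \<Longrightarrow> inA q \<beta>' y"
  unfolding inA_def by auto

lemma inA_one: "q \<noteq> 0 \<Longrightarrow> 0 \<le> \<beta> \<Longrightarrow> inA q \<beta> 1"
  unfolding inA_def by simp

lemma inA_par:
  assumes A1: "inA q \<beta>1 y1" and A2: "inA q \<beta>2 y2" and b1: "0 \<le> \<beta>1" "\<beta>1 < 1" and b2: "0 \<le> \<beta>2" "\<beta>2 < 1"
    and R: "cmod (q - 1) * \<beta>1 * \<beta>2 < 1" and q0: "q \<noteq> 0"
  shows "inA q ((\<beta>1 + \<beta>2 + (cmod (q - 1) + 1) * \<beta>1 * \<beta>2) / (1 - cmod (q - 1) * \<beta>1 * \<beta>2)) (y1 * y2)"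
proof -
  define Q where "Q = q - 1"
  define R where "R = cmod Q"
  have qQ: "q = Q + 1" unfolding Q_def by simp
  define w1 where "w1 = (y1 - 1) / (y1 + Q)"
  define w2 where "w2 = (y2 - 1) / (y2 + Q)"
  have n1: "y1 + Q \<noteq> 0" and n2: "y2 + Q \<noteq> 0" using A1 A2 unfolding inA_def Q_def by auto
  have w1b: "cmod w1 \<le> \<beta>1" and w2b: "cmod w2 \<le> \<beta>2" using A1 A2 unfolding inA_def w1_def w2_def Q_def by auto
  have w1n: "w1 \<noteq> 1" using w1b b1 by auto
  have w2n: "w2 \<noteq> 1" using w2b b2 by auto
  have P1: "y1 * (1 - w1) = 1 + Q * w1"
  proof -
    have h: "w1 * (y1 + Q) = y1 - 1" unfolding w1_def using n1 by simp
    have "y1 * (1 - w1) = y1 - w1 * (y1 + Q) + Q * w1" by (simp add: algebra_simps)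
    then show ?thesis unfolding h by simp
  qed
  have P2: "y2 * (1 - w2) = 1 + Q * w2"
  proof -
    have h: "w2 * (y2 + Q) = y2 - 1" unfolding w2_def using n2 by simp
    have "y2 * (1 - w2) = y2 - w2 * (y2 + Q) + Q * w2" by (simp add: algebra_simps)
    then show ?thesis unfolding h by simp
  qed
  define D where "D = 1 + Q * w1 * w2"
  define N where "N = w1 + w2 + (Q - 1) * w1 * w2"
  define M where "M = (1 - w1) * (1 - w2)"
  have M0: "M \<noteq> 0" unfolding M_def using w1n w2n by simp
  have R0: "0 \<le> R" unfolding R_def by simp
  have Qw: "cmod (Q * w1 * w2) \<le> R * \<beta>1 * \<beta>2"
  proof -
    have "cmod (Q * w1 * w2) = R * cmod w1 * cmod w2" unfolding R_def by (simp add: norm_mult)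
    also have "\<dots> \<le> R * \<beta>1 * \<beta>2" using w1b w2b R0 b1 by (intro mult_mono mult_left_mono) auto
    finally show ?thesis .
  qed
  have RR: "R * \<beta>1 * \<beta>2 < 1" using R unfolding R_def Q_def by simp
  have Dlow: "cmod D \<ge> 1 - R * \<beta>1 * \<beta>2"
  proof -
    have "cmod (1::complex) \<le> cmod D + cmod (Q * w1 * w2)"
      using norm_triangle_ineq4[of D "Q * w1 * w2"] unfolding D_def by simp
    then show ?thesis using Qw by simp
  qed
  then have D0: "D \<noteq> 0" using RR by auto
  have Nup: "cmod N \<le> \<beta>1 + \<beta>2 + (R + 1) * \<beta>1 * \<beta>2"
  proof -
    have c1: "cmod (Q - 1) \<le> R + 1" unfolding R_def using norm_triangle_ineq4[of Q 1] by simp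
    have "cmod ((Q - 1) * w1 * w2) = cmod (Q - 1) * cmod w1 * cmod w2" by (simp add: norm_mult)
    also have "\<dots> \<le> (R + 1) * \<beta>1 * \<beta>2" using c1 w1b w2b R0 b1 by (intro mult_mono) auto
    finally have c2: "cmod ((Q - 1) * w1 * w2) \<le> (R + 1) * \<beta>1 * \<beta>2" .
    have "cmod N \<le> cmod (w1 + w2) + cmod ((Q - 1) * w1 * w2)" unfolding N_def by (rule norm_triangle_ineq)
    also have "cmod (w1 + w2) \<le> cmod w1 + cmod w2" by (rule norm_triangle_ineq)
    finally show ?thesis using w1b w2b c2 by simp
  qed
  have e1: "(y1 * y2 + Q) * M = q * D"
  proof -
    have "(y1 * y2 + Q) * M = (y1 * (1 - w1)) * (y2 * (1 - w2)) + Q * M" unfolding M_def by (simp add: algebra_simps)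
    also have "\<dots> = (1 + Q * w1) * (1 + Q * w2) + Q * ((1 - w1) * (1 - w2))" unfolding P1 P2 M_def ..
    also have "\<dots> = q * D" unfolding qQ D_def by algebra
    finally show ?thesis .
  qed
  have e2: "(y1 * y2 - 1) * M = q * N"
  proof -
    have "(y1 * y2 - 1) * M = (y1 * (1 - w1)) * (y2 * (1 - w2)) - M" unfolding M_def by (simp add: algebra_simps)
    also have "\<dots> = (1 + Q * w1) * (1 + Q * w2) - ((1 - w1) * (1 - w2))" unfolding P1 P2 M_def ..
    also have "\<dots> = q * N" unfolding qQ N_def by algebra
    finally show ?thesis .
  qed
  have nz: "y1 * y2 + Q \<noteq> 0" using e1 q0 D0 M0 by auto
  have ratio: "(y1 * y2 - 1) / (y1 * y2 + Q) = N / D"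
  proof -
    have "(y1 * y2 - 1) / (y1 * y2 + Q) = ((y1 * y2 - 1) * M) / ((y1 * y2 + Q) * M)" using M0 by simp
    also have "\<dots> = (q * N) / (q * D)" unfolding e1 e2 ..
    also have "\<dots> = N / D" using q0 by simp
    finally show ?thesis .
  qed
  have "cmod (N / D) \<le> (\<beta>1 + \<beta>2 + (R + 1) * \<beta>1 * \<beta>2) / (1 - R * \<beta>1 * \<beta>2)"
    unfolding norm_divide using Nup Dlow RR order_trans[OF norm_ge_zero Nup] by (intro frac_le) auto
  then show ?thesis unfolding inA_def using nz ratio unfolding Q_def R_def by simp
qed

lemma inA_cone:
  assumes A: "inA q \<beta> y" and b: "\<beta> \<le> 1 / cmod (q - 1)" and R: "cmod (q - 1) > 1"
    and s: "0 \<le> s" "s \<le> 1"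
  shows "inA q (1 / cmod (q - 1)) (of_real s * y)"
proof -
  define Q where "Q = q - 1"
  define \<rho> where "\<rho> = 1 / cmod Q"
  have \<rho>0: "0 < \<rho>" "\<rho> < 1" using R unfolding \<rho>_def Q_def by (auto simp: divide_less_eq_1)
  have \<rho>Q: "\<rho>\<^sup>2 * (Re Q ^ 2 + Im Q ^ 2) = 1"
  proof -
    have "Re Q ^ 2 + Im Q ^ 2 = (cmod Q)\<^sup>2" by (simp add: cmod_power2)
    moreover have "\<rho>\<^sup>2 * (cmod Q)\<^sup>2 = (\<rho> * cmod Q)\<^sup>2" by (simp add: power_mult_distrib)
    moreover have "cmod Q \<noteq> 0" using R unfolding Q_def by auto
    then have "\<rho> * cmod Q = 1" unfolding \<rho>_def by simp
    ultimately show ?thesis by simp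
  qed
  have n: "y + Q \<noteq> 0" using A unfolding inA_def Q_def by auto
  have "cmod (y - 1) / cmod (y + Q) \<le> \<rho>" using A b unfolding inA_def Q_def \<rho>_def by (simp add: norm_divide)
  then have y1: "cmod (y - 1) \<le> \<rho> * cmod (y + Q)" using n by (simp add: divide_le_eq)
  have F1: "cmod (y - 1) ^ 2 \<le> \<rho>\<^sup>2 * cmod (y + Q) ^ 2"
    using power_mono[OF y1 norm_ge_zero, of 2] by (simp only: power_mult_distrib)
  define a where "a = Re y"
  define b' where "b' = Im y"
  define c where "c = Re Q"
  define d where "d = Im Q"
  have s1: "cmod (y - 1) ^ 2 = (a - 1)\<^sup>2 + b'\<^sup>2"
    using cmod_power2[of "y - 1"] unfolding a_def b'_def by simp
  have s2: "cmod (y + Q) ^ 2 = (a + c)\<^sup>2 + (b' + d)\<^sup>2"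
    using cmod_power2[of "y + Q"] unfolding a_def b'_def c_def d_def by simp
  have F1': "(a - 1)\<^sup>2 + b'\<^sup>2 \<le> \<rho>\<^sup>2 * ((a + c)\<^sup>2 + (b' + d)\<^sup>2)"
    using F1 unfolding s1 s2 .
  have \<rho>Q': "\<rho>\<^sup>2 * (c\<^sup>2 + d\<^sup>2) = 1" using \<rho>Q unfolding c_def d_def .
  have key: "(s * a - 1)\<^sup>2 + (s * b')\<^sup>2 - \<rho>\<^sup>2 * ((s * a + c)\<^sup>2 + (s * b' + d)\<^sup>2) =
      s * ((a - 1)\<^sup>2 + b'\<^sup>2 - \<rho>\<^sup>2 * ((a + c)\<^sup>2 + (b' + d)\<^sup>2)) + (s\<^sup>2 - s) * (a\<^sup>2 + b'\<^sup>2) * (1 - \<rho>\<^sup>2)"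
  proof -
    have "(s * a - 1)\<^sup>2 + (s * b')\<^sup>2 - \<rho>\<^sup>2 * ((s * a + c)\<^sup>2 + (s * b' + d)\<^sup>2) -
      (s * ((a - 1)\<^sup>2 + b'\<^sup>2 - \<rho>\<^sup>2 * ((a + c)\<^sup>2 + (b' + d)\<^sup>2)) + (s\<^sup>2 - s) * (a\<^sup>2 + b'\<^sup>2) * (1 - \<rho>\<^sup>2))
      = (1 - s) * (1 - \<rho>\<^sup>2 * (c\<^sup>2 + d\<^sup>2))"
      by (simp add: power2_eq_square algebra_simps)
    then show ?thesis unfolding \<rho>Q' by simp
  qed
  have t1: "s * ((a - 1)\<^sup>2 + b'\<^sup>2 - \<rho>\<^sup>2 * ((a + c)\<^sup>2 + (b' + d)\<^sup>2)) \<le> 0"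
    using F1' s by (simp add: mult_nonneg_nonpos)
  have t2: "(s\<^sup>2 - s) * (a\<^sup>2 + b'\<^sup>2) * (1 - \<rho>\<^sup>2) \<le> 0"
  proof -
    have "s * s \<le> s" using s by (simp add: mult_left_le)
    then have "s\<^sup>2 - s \<le> 0" by (simp add: power2_eq_square)
    moreover have "1 - \<rho>\<^sup>2 \<ge> 0" using \<rho>0 by (simp add: power_le_one)
    ultimately show ?thesis by (simp add: mult_nonpos_nonneg)
  qed
  have F2: "(s * a - 1)\<^sup>2 + (s * b')\<^sup>2 \<le> \<rho>\<^sup>2 * ((s * a + c)\<^sup>2 + (s * b' + d)\<^sup>2)"
    using key t1 t2 by linarith
  have r1: "Re (of_real s * y - 1) = s * a - 1" "Im (of_real s * y - 1) = s * b'"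
    unfolding a_def b'_def by simp_all
  have r2: "Re (of_real s * y + Q) = s * a + c" "Im (of_real s * y + Q) = s * b' + d"
    unfolding a_def b'_def c_def d_def by simp_all
  have m1: "cmod (of_real s * y - 1) ^ 2 = (s * a - 1)\<^sup>2 + (s * b')\<^sup>2"
    using cmod_power2[of "of_real s * y - 1"] unfolding r1 .
  have m2: "cmod (of_real s * y + Q) ^ 2 = (s * a + c)\<^sup>2 + (s * b' + d)\<^sup>2"
    using cmod_power2[of "of_real s * y + Q"] unfolding r2 .
  have F2': "cmod (of_real s * y - 1) ^ 2 \<le> (\<rho> * cmod (of_real s * y + Q)) ^ 2"
  proof -
    have e: "(\<rho> * cmod (of_real s * y + Q)) ^ 2 = \<rho>\<^sup>2 * ((s * a + c)\<^sup>2 + (s * b' + d)\<^sup>2)"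
      by (simp only: power_mult_distrib m2)
    show ?thesis unfolding m1 e using F2 .
  qed
  have F3: "cmod (of_real s * y - 1) \<le> \<rho> * cmod (of_real s * y + Q)"
    by (rule power2_le_imp_le[OF F2']) (use \<rho>0 in simp)
  have nz: "of_real s * y + Q \<noteq> 0"
  proof
    assume h: "of_real s * y + Q = 0"
    then have "of_real s * y - 1 = 0" using F3 by simp
    then have "of_real s * y = 1" by simp
    then have "Q = -1" using h by (simp add: add_eq_0_iff)
    then show False using R unfolding Q_def by simp
  qed
  have pos: "cmod (of_real s * y + Q) > 0" using nz by simp
  have "cmod ((of_real s * y - 1) / (of_real s * y + Q)) \<le> \<rho>"
    unfolding norm_divide using F3 pos by (simp add: divide_le_eq mult.commute)
  then show ?thesis unfolding inA_def using nz unfolding Q_def \<rho>_def by simp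
qed

lemma div_div_cancel: "s \<noteq> 0 \<Longrightarrow> (a / s) / (b / s) = a / (b::complex)"
  by (cases "b = 0") (simp_all add: field_simps)

lemma inA_series:
  assumes A1: "inA q \<rho> (1 + v1)" and A2: "inA q \<rho> (1 + v2)" and \<rho>: "0 \<le> \<rho>" "\<rho> < 1"
  shows "q + v1 + v2 \<noteq> 0" "inA q (\<rho>\<^sup>2) (1 + v1 * v2 / (q + v1 + v2))"
proof -
  have x1: "1 + v1 - 1 = v1" "1 + v1 + (q - 1) = q + v1" by simp_all
  have x2: "1 + v2 - 1 = v2" "1 + v2 + (q - 1) = q + v2" by simp_all
  have n1: "q + v1 \<noteq> 0" and t1: "cmod (v1 / (q + v1)) \<le> \<rho>" using A1 unfolding inA_def x1 by auto
  have n2: "q + v2 \<noteq> 0" and t2: "cmod (v2 / (q + v2)) \<le> \<rho>" using A2 unfolding inA_def x2 by auto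
  have tt: "cmod (v1 / (q + v1) * (v2 / (q + v2))) \<le> \<rho>\<^sup>2"
    unfolding norm_mult power2_eq_square using t1 t2 \<rho> by (intro mult_mono) auto
  have prod: "(q + v1) * (q + v2) = q * (q + v1 + v2) + v1 * v2" by (simp add: algebra_simps)
  show ne: "q + v1 + v2 \<noteq> 0"
  proof
    assume h: "q + v1 + v2 = 0"
    then have E: "(q + v1) * (q + v2) = v1 * v2" using prod by simp
    have nz: "v1 * v2 \<noteq> 0" using E n1 n2 by (metis mult_eq_0_iff)
    have "v1 / (q + v1) * (v2 / (q + v2)) = (v1 * v2) / ((q + v1) * (q + v2))" by simp
    also have "\<dots> = 1" using E nz by simp
    finally have "cmod (v1 / (q + v1) * (v2 / (q + v2))) = 1" by simp
    moreover have "\<rho>\<^sup>2 < 1" using \<rho> by (simp add: abs_square_less_1)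
    ultimately show False using tt by simp
  qed
  define u where "u = v1 * v2 / (q + v1 + v2)"
  have "q + u = (q * (q + v1 + v2) + v1 * v2) / (q + v1 + v2)" unfolding u_def using ne by (simp add: field_simps)
  then have qu: "q + u = (q + v1) * (q + v2) / (q + v1 + v2)" using prod by simp
  have qu0: "q + u \<noteq> 0" using qu ne n1 n2 by simp
  have "u / (q + u) = u / ((q + v1) * (q + v2) / (q + v1 + v2))" by (simp only: qu)
  also have "\<dots> = (v1 * v2 / (q + v1 + v2)) / ((q + v1) * (q + v2) / (q + v1 + v2))" by (simp only: u_def)
  also have "\<dots> = (v1 * v2) / ((q + v1) * (q + v2))" using ne by (rule div_div_cancel)
  also have "\<dots> = v1 / (q + v1) * (v2 / (q + v2))" by simp
  finally have eqq: "u / (q + u) = v1 / (q + v1) * (v2 / (q + v2))" .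
  have x3: "1 + u - 1 = u" "1 + u + (q - 1) = q + u" by simp_all
  show "inA q (\<rho>\<^sup>2) (1 + v1 * v2 / (q + v1 + v2))" unfolding inA_def u_def[symmetric] x3 eqq
    using qu0 tt by (intro conjI)
qed

lemma bfun_comb:
  assumes R: "R > 1" and Y1: "1 \<le> Y1" and Y2: "1 \<le> Y2" and Y12: "Y1 * Y2 < R"
  shows "R * bfun R Y1 * bfun R Y2 < 1"
    "bfun R (Y1 * Y2) = (bfun R Y1 + bfun R Y2 + (R + 1) * bfun R Y1 * bfun R Y2) / (1 - R * bfun R Y1 * bfun R Y2)"
proof -
  have Y1R: "Y1 < R" using Y12 Y2 Y1 by (smt (verit) mult_le_cancel_left1)
  have Y2R: "Y2 < R" using Y12 Y2 Y1 by (smt (verit) mult_le_cancel_right1)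
  define A where "A = R - Y1"
  define B where "B = R - Y2"
  define b1 where "b1 = bfun R Y1"
  define b2 where "b2 = bfun R Y2"
  have A0: "A > 0" and B0: "B > 0" unfolding A_def B_def using Y1R Y2R by auto
  have hb1: "b1 * A = Y1 - 1" unfolding b1_def A_def bfun_def using A0 unfolding A_def by simp
  have hb2: "b2 * B = Y2 - 1" unfolding b2_def B_def bfun_def using B0 unfolding B_def by simp
  have idD: "(1 - R * b1 * b2) * (A * B) = (R - 1) * (R - Y1 * Y2)"
  proof -
    have "(1 - R * b1 * b2) * (A * B) = A * B - R * (b1 * A) * (b2 * B)" by (simp add: algebra_simps)
    also have "\<dots> = (R - 1) * (R - Y1 * Y2)" by (simp only: hb1 hb2) (simp add: A_def B_def algebra_simps)
    finally show ?thesis .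
  qed
  have idN: "(b1 + b2 + (R + 1) * b1 * b2) * (A * B) = (R - 1) * (Y1 * Y2 - 1)"
  proof -
    have "(b1 + b2 + (R + 1) * b1 * b2) * (A * B) = (b1 * A) * B + (b2 * B) * A + (R + 1) * (b1 * A) * (b2 * B)"
      by (simp add: algebra_simps)
    also have "\<dots> = (R - 1) * (Y1 * Y2 - 1)" by (simp only: hb1 hb2) (simp add: A_def B_def algebra_simps)
    finally show ?thesis .
  qed
  have AB: "A * B > 0" using A0 B0 by simp
  have pos: "(R - 1) * (R - Y1 * Y2) > 0" using R Y12 by simp
  then have D: "1 - R * b1 * b2 > 0" using idD AB by (metis zero_less_mult_pos2)
  then show "R * bfun R Y1 * bfun R Y2 < 1" unfolding b1_def b2_def by simp
  have "(b1 + b2 + (R + 1) * b1 * b2) / (1 - R * b1 * b2) =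
      ((b1 + b2 + (R + 1) * b1 * b2) * (A * B)) / ((1 - R * b1 * b2) * (A * B))"
    using A0 B0 by (intro mult_divide_mult_cancel_right[symmetric]) simp
  also have "\<dots> = ((R - 1) * (Y1 * Y2 - 1)) / ((R - 1) * (R - Y1 * Y2))" unfolding idD idN ..
  also have "\<dots> = bfun R (Y1 * Y2)" unfolding bfun_def using R by simp
  finally show "bfun R (Y1 * Y2) = (bfun R Y1 + bfun R Y2 + (R + 1) * bfun R Y1 * bfun R Y2) / (1 - R * bfun R Y1 * bfun R Y2)"
    unfolding b1_def b2_def by simp
qed

lemma bfun_mono: "1 \<le> Y \<Longrightarrow> Y \<le> Y' \<Longrightarrow> Y' < R \<Longrightarrow> bfun R Y \<le> bfun R Y'"
  unfolding bfun_def by (intro frac_le) auto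

lemma bfun_nonneg: "1 \<le> Y \<Longrightarrow> Y < R \<Longrightarrow> 0 \<le> bfun R Y"
  unfolding bfun_def by simp

lemma bfun_top: assumes "R > 1" shows "bfun R (2 / (1 + 1 / R)) = 1 / R"
proof -
  have "1 < R * R" using assms by (metis less_1_mult)
  then have "R * R \<noteq> 1" by simp
  then show ?thesis unfolding bfun_def using assms by (simp add: field_simps)
qed


lemma ends_in_adj: "f \<in> A \<Longrightarrow> ends f \<in> adj A ends"
  unfolding adj_def by (cases "ends f") auto

lemma ends_in_adj_sw: "f \<in> A \<Longrightarrow> prod.swap (ends f) \<in> adj A ends"
  unfolding adj_def by (cases "ends f") auto

lemma flow_ser:
  assumes fl: "flowok L (insert w V) (insert e' E) (ends(e := (a, w), e' := (w, b))) k"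
    and e: "e \<in> E" and e': "e' \<notin> E" and ab: "ends e = (a, b)" and k1: "1 \<le> k e" "1 \<le> k e'"
  shows "flowok L V E ends (k(e := 1))"
  unfolding flowok_def
proof (intro ballI impI notI)
  define ends' where "ends' = ends(e := (a, w), e' := (w, b))"
  have ee: "e \<noteq> e'" using e e' by auto
  fix x y assume x: "x \<in> V" and y: "y \<in> V" and xy: "x \<noteq> y"
  assume F: "fam (Ek E (k(e := 1))) (ends \<circ> fst) x y (Suc L)"
  define g where "g p = (if fst p = e then {(e, 0), (e', 0)} else {p})" for p :: "'b \<times> nat"
  have "fam (Ek (insert e' E) k) (ends' \<circ> fst) x y (Suc L)"
  proof (rule fam_transfer[OF F, of g])
    fix p assume p: "p \<in> Ek E (k(e := 1))"
    show "g p \<subseteq> Ek (insert e' E) k" using p k1 unfolding g_def Ek_def by (auto split: if_splits)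
    show "(ends \<circ> fst) p \<in> (adj (g p) (ends' \<circ> fst))\<^sup>*"
    proof (cases "fst p = e")
      case True
      have "(a, w) \<in> adj (g p) (ends' \<circ> fst)"
        using ends_in_adj[of "(e, 0)" "g p" "ends' \<circ> fst"] True ee unfolding g_def ends'_def by simp
      moreover have "(w, b) \<in> adj (g p) (ends' \<circ> fst)"
        using ends_in_adj[of "(e', 0)" "g p" "ends' \<circ> fst"] True ee unfolding g_def ends'_def by simp
      ultimately have "(a, b) \<in> (adj (g p) (ends' \<circ> fst))\<^sup>*" by (meson r_into_rtrancl rtrancl_trans)
      then show ?thesis using True ab by simp
    next
      case False
      have "fst p \<in> E" using p unfolding Ek_def by auto
      then have "fst p \<noteq> e'" using e' by auto
      then have "ends' (fst p) = ends (fst p)" unfolding ends'_def using False by simp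
      then have "(ends \<circ> fst) p \<in> adj (g p) (ends' \<circ> fst)"
        using ends_in_adj[of p "g p" "ends' \<circ> fst"] False unfolding g_def by simp
      then show ?thesis by auto
    qed
  next
    fix p1 p2 assume p1: "p1 \<in> Ek E (k(e := 1))" and p2: "p2 \<in> Ek E (k(e := 1))" and ne: "p1 \<noteq> p2"
    have f1: "fst p1 \<in> E" "fst p1 = e \<longrightarrow> snd p1 = 0" using p1 unfolding Ek_def by auto
    have f2: "fst p2 \<in> E" "fst p2 = e \<longrightarrow> snd p2 = 0" using p2 unfolding Ek_def by auto
    show "g p1 \<inter> g p2 = {}"
      using f1 f2 ne e' unfolding g_def by (cases p1, cases p2) auto
  qed
  then show False using fl x y xy unfolding flowok_def ends'_def by auto
qed

lemma flow_par:
  assumes fl: "flowok L V (insert e' E) (ends(e' := ends e)) k"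
    and e: "e \<in> E" and e': "e' \<notin> E"
  shows "flowok L V E ends (k(e := k e + k e'))"
  unfolding flowok_def
proof (intro ballI impI notI)
  define ends' where "ends' = ends(e' := ends e)"
  have ee: "e \<noteq> e'" using e e' by auto
  fix x y assume x: "x \<in> V" and y: "y \<in> V" and xy: "x \<noteq> y"
  assume F: "fam (Ek E (k(e := k e + k e'))) (ends \<circ> fst) x y (Suc L)"
  define g where "g p = (if fst p = e \<and> k e \<le> snd p then {(e', snd p - k e)} else {p})" for p :: "'b \<times> nat"
  have "fam (Ek (insert e' E) k) (ends' \<circ> fst) x y (Suc L)"
  proof (rule fam_transfer[OF F, of g])
    fix p assume p: "p \<in> Ek E (k(e := k e + k e'))"
    show "g p \<subseteq> Ek (insert e' E) k" using p unfolding g_def Ek_def by (auto split: if_splits)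
    have "fst p \<in> E" using p unfolding Ek_def by auto
    then have "fst p \<noteq> e'" using e' by auto
    then have ep: "ends' (fst p) = ends (fst p)" unfolding ends'_def by simp
    show "(ends \<circ> fst) p \<in> (adj (g p) (ends' \<circ> fst))\<^sup>*"
    proof (cases "fst p = e \<and> k e \<le> snd p")
      case True
      have "(ends' \<circ> fst) (e', snd p - k e) \<in> adj (g p) (ends' \<circ> fst)"
        using ends_in_adj[of "(e', snd p - k e)" "g p" "ends' \<circ> fst"] True unfolding g_def by simp
      then show ?thesis using True unfolding ends'_def by auto
    next
      case False
      have gp: "g p = {p}" unfolding g_def by (rule if_not_P[OF False])
      have "(ends' \<circ> fst) p \<in> adj (g p) (ends' \<circ> fst)"
        unfolding gp by (rule ends_in_adj) simp
      then show ?thesis using ep by auto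
    qed
  next
    fix p1 p2 assume p1: "p1 \<in> Ek E (k(e := k e + k e'))" and p2: "p2 \<in> Ek E (k(e := k e + k e'))" and ne: "p1 \<noteq> p2"
    have f1: "fst p1 \<in> E" using p1 unfolding Ek_def by auto
    have f2: "fst p2 \<in> E" using p2 unfolding Ek_def by auto
    show "g p1 \<inter> g p2 = {}"
    proof (cases p1, cases p2)
      fix a1 i1 a2 i2 assume P: "p1 = (a1, i1)" "p2 = (a2, i2)"
      show ?thesis using P ne f1 f2 e' unfolding g_def by auto
    qed
  qed
  then show False using fl x y xy unfolding flowok_def ends'_def by auto
qed

lemma ser_adj_sub:
  assumes e: "e \<in> E" and e': "e' \<notin> E" and ab: "ends e = (a, b)" and F: "F \<subseteq> E"
  shows "adj F ends \<subseteq> (adj (insert e' F) (ends(e := (a, w), e' := (w, b))))\<^sup>*"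
proof (rule subrelI)
  define ends' where "ends' = ends(e := (a, w), e' := (w, b))"
  have ee: "e \<noteq> e'" using e e' by auto
  fix u x assume "(u, x) \<in> adj F ends"
  then obtain f where f: "f \<in> F" "ends f = (u, x) \<or> ends f = (x, u)" unfolding adj_def by auto
  have fe': "f \<noteq> e'" using f F e' by auto
  show "(u, x) \<in> (adj (insert e' F) ends')\<^sup>*"
  proof (cases "f = e")
    case True
    have 1: "(a, w) \<in> adj (insert e' F) ends'" "(w, a) \<in> adj (insert e' F) ends'"
      using ends_in_adj[of e "insert e' F" ends'] ends_in_adj_sw[of e "insert e' F" ends'] True f ee
      unfolding ends'_def by auto
    have 2: "(w, b) \<in> adj (insert e' F) ends'" "(b, w) \<in> adj (insert e' F) ends'"
      using ends_in_adj[of e' "insert e' F" ends'] ends_in_adj_sw[of e' "insert e' F" ends'] ee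
      unfolding ends'_def by auto
    have "(a, b) \<in> (adj (insert e' F) ends')\<^sup>*" "(b, a) \<in> (adj (insert e' F) ends')\<^sup>*"
      using 1 2 by (meson r_into_rtrancl rtrancl_trans)+
    then show ?thesis using f True ab by auto
  next
    case False
    have "ends' f = ends f" unfolding ends'_def using False fe' by simp
    then have "(u, x) \<in> adj (insert e' F) ends'" using f unfolding adj_def by force
    then show ?thesis by auto
  qed
qed


definition nonbridge :: "'v set \<Rightarrow> 'e set \<Rightarrow> ('e \<Rightarrow> 'v \<times> 'v) \<Rightarrow> 'e \<Rightarrow> bool" where
  "nonbridge V E ends e \<longleftrightarrow> (fst (ends e), snd (ends e)) \<in> conn V (E - {e}) ends"

lemma forest_loopless: assumes "forest V E ends" shows "loopless E ends"
  unfolding loopless_def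
proof
  fix e assume e: "e \<in> E"
  show "fst (ends e) \<noteq> snd (ends e)"
  proof
    assume h: "fst (ends e) = snd (ends e)"
    have "fst (ends e) \<in> V" using assms e unfolding forest_def multigraph_def by auto
    then have "(fst (ends e), snd (ends e)) \<in> conn V (E - {e}) ends" unfolding conn_def using h by simp
    then show False using assms e unfolding forest_def by auto
  qed
qed

lemma sp_wf: "series_parallel V E ends \<Longrightarrow> multigraph V E ends \<and> loopless E ends"
proof (induction rule: series_parallel.induct)
  case (sp_forest V E ends)
  then show ?case using forest_loopless unfolding forest_def by auto
next
  case (sp_series V E ends e a b w e')
  have ee: "e \<noteq> e'" using sp_series.hyps by auto
  have ab: "a \<in> V" "b \<in> V" "a \<noteq> b" using sp_series unfolding multigraph_def loopless_def by force+
  show ?case using sp_series ee ab unfolding multigraph_def loopless_def by auto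
next
  case (sp_parallel V E ends e e')
  then show ?case unfolding multigraph_def loopless_def by auto
qed

context
  fixes q :: complex and L :: nat and X :: real
  assumes Lge: "L \<ge> 2" and R1: "cmod (q - 1) > 1" and X1: "X > 1"
    and XL: "X ^ (L - 1) = 2 / (1 + 1 / cmod (q - 1))"
    and key: "(1 / cmod (q - 1))\<^sup>2 \<le> bfun (cmod (q - 1)) X"
begin

definition inC :: "nat \<Rightarrow> complex \<Rightarrow> bool" where
  "inC k y \<longleftrightarrow> (\<exists>s z. 0 \<le> s \<and> s \<le> 1 \<and> inA q (bfun (cmod (q - 1)) (X ^ k)) z \<and> y = of_real s * z)"

lemma q0: "q \<noteq> 0" using R1 by auto

lemma rho_facts: "0 < 1 / cmod (q - 1)" "1 / cmod (q - 1) < 1"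
  using R1 by (auto simp: divide_less_eq_1)

lemma Xk: assumes "k \<le> L - 1" shows "1 \<le> X ^ k" "X ^ k \<le> X ^ (L - 1)" "X ^ (L - 1) < cmod (q - 1)"
proof -
  show "1 \<le> X ^ k" using X1 by simp
  show "X ^ k \<le> X ^ (L - 1)" using X1 assms by (simp add: power_increasing)
  define R where "R = cmod (q - 1)"
  have "2 / (1 + 1 / R) < R"
  proof -
    have R0: "R > 1" using R1 unfolding R_def .
    have "2 / (1 + 1 / R) = 2 * R / (R + 1)" using R0 by (simp add: field_simps)
    also have "\<dots> < R" using R0 by (simp add: divide_less_eq)
    finally show ?thesis .
  qed
  then show "X ^ (L - 1) < cmod (q - 1)" using XL unfolding R_def by simp
qed

lemma bk: assumes "k \<le> L - 1"
  shows "0 \<le> bfun (cmod (q - 1)) (X ^ k)" "bfun (cmod (q - 1)) (X ^ k) \<le> 1 / cmod (q - 1)"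
proof -
  note x = Xk[OF assms]
  show "0 \<le> bfun (cmod (q - 1)) (X ^ k)" using x by (intro bfun_nonneg) auto
  have "bfun (cmod (q - 1)) (X ^ k) \<le> bfun (cmod (q - 1)) (X ^ (L - 1))"
    using x by (intro bfun_mono) auto
  also have "\<dots> = 1 / cmod (q - 1)" unfolding XL using bfun_top R1 by simp
  finally show "bfun (cmod (q - 1)) (X ^ k) \<le> 1 / cmod (q - 1)" .
qed

lemma inC_A: assumes "inC k y" "k \<le> L - 1" shows "inA q (1 / cmod (q - 1)) y"
proof -
  obtain s z where sz: "0 \<le> s" "s \<le> 1" "inA q (bfun (cmod (q - 1)) (X ^ k)) z" "y = of_real s * z"
    using assms unfolding inC_def by auto
  show ?thesis using inA_cone[OF sz(3) bk(2)[OF assms(2)] R1 sz(1,2)] sz(4) by simp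
qed

lemma inA_rho_nz: "inA q (1 / cmod (q - 1)) (1 + v) \<Longrightarrow> q + v \<noteq> 0"
  unfolding inA_def by (simp add: algebra_simps)

lemma inC_par: assumes "inC k1 y1" "inC k2 y2" "k1 + k2 \<le> L - 1" shows "inC (k1 + k2) (y1 * y2)"
proof -
  define R where "R = cmod (q - 1)"
  obtain s1 z1 where sz1: "0 \<le> s1" "s1 \<le> 1" "inA q (bfun R (X ^ k1)) z1" "y1 = of_real s1 * z1"
    using assms unfolding inC_def R_def by auto
  obtain s2 z2 where sz2: "0 \<le> s2" "s2 \<le> 1" "inA q (bfun R (X ^ k2)) z2" "y2 = of_real s2 * z2"
    using assms unfolding inC_def R_def by auto
  have k1: "k1 \<le> L - 1" and k2: "k2 \<le> L - 1" using assms by auto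
  have b1: "0 \<le> bfun R (X ^ k1)" "bfun R (X ^ k1) < 1" using bk[OF k1] rho_facts(2) unfolding R_def by linarith+
  have b2: "0 \<le> bfun R (X ^ k2)" "bfun R (X ^ k2) < 1" using bk[OF k2] rho_facts(2) unfolding R_def by linarith+
  have Y12: "X ^ k1 * X ^ k2 < R" using Xk[OF assms(3)] unfolding R_def by (simp add: power_add)
  note comb = bfun_comb[of R "X ^ k1" "X ^ k2"]
  have RR: "R * bfun R (X ^ k1) * bfun R (X ^ k2) < 1" using comb R1 Y12 X1 unfolding R_def by auto
  have "inA q ((bfun R (X ^ k1) + bfun R (X ^ k2) + (R + 1) * bfun R (X ^ k1) * bfun R (X ^ k2)) /
      (1 - R * bfun R (X ^ k1) * bfun R (X ^ k2))) (z1 * z2)"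
    using inA_par[OF sz1(3) sz2(3) b1 b2 _ q0] RR unfolding R_def by simp
  then have "inA q (bfun R (X ^ k1 * X ^ k2)) (z1 * z2)" using comb R1 Y12 X1 unfolding R_def by simp
  then have "inA q (bfun R (X ^ (k1 + k2))) (z1 * z2)" by (simp add: power_add)
  moreover have "y1 * y2 = of_real (s1 * s2) * (z1 * z2)" using sz1 sz2 by simp
  moreover have "0 \<le> s1 * s2" "s1 * s2 \<le> 1" using sz1 sz2 by (auto intro: mult_le_one)
  ultimately show ?thesis unfolding inC_def R_def by blast
qed

lemma par_bridge: assumes "inA q (1 / cmod (q - 1)) y1" "inA q (1 / cmod (q - 1)) y2"
  shows "y1 * y2 + (q - 1) \<noteq> 0"
proof -
  have "cmod (q - 1) * (1 / cmod (q - 1)) * (1 / cmod (q - 1)) < 1" using rho_facts R1 by simp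
  then show ?thesis using inA_par[OF assms _ _ _ _ _ q0] rho_facts unfolding inA_def by auto
qed

lemma ser_step: assumes "inA q (1 / cmod (q - 1)) (1 + v1)" "inA q (1 / cmod (q - 1)) (1 + v2)"
  shows "q + v1 + v2 \<noteq> 0" "inC 1 (1 + v1 * v2 / (q + v1 + v2))"
proof -
  note s = inA_series[OF assms, of] rho_facts
  show "q + v1 + v2 \<noteq> 0" using inA_series(1)[OF assms] rho_facts by auto
  have "inA q ((1 / cmod (q - 1))\<^sup>2) (1 + v1 * v2 / (q + v1 + v2))"
    using inA_series(2)[OF assms] rho_facts by auto
  then have "inA q (bfun (cmod (q - 1)) (X ^ 1)) (1 + v1 * v2 / (q + v1 + v2))"
    using inA_mono key by simp
  then show "inC 1 (1 + v1 * v2 / (q + v1 + v2))" unfolding inC_def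
    by (intro exI[of _ 1] exI[of _ "1 + v1 * v2 / (q + v1 + v2)"]) simp
qed


lemma main_gen:
  assumes "series_parallel V E ends"
  shows "\<And>k v. (\<forall>f\<in>E. 1 \<le> k f) \<Longrightarrow> flowok L V E ends k \<Longrightarrow>
     (\<forall>f\<in>E. q + v f \<noteq> 0 \<and> (nonbridge V E ends f \<longrightarrow> inC (k f) (1 + v f))) \<Longrightarrow>
     tutteZ V E ends q v \<noteq> 0"
  using assms
proof (induction rule: series_parallel.induct)
  case (sp_forest V E ends k v)
  then show ?case using forest_Z[OF sp_forest.hyps q0] by auto
next
  case (sp_series V E ends e a b w e' k v)
  define ends' where "ends' = ends(e := (a, w), e' := (w, b))"
  define V' where "V' = insert w V"
  define E' where "E' = insert e' E"
  have spG: "series_parallel V E ends" by fact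
  have spG': "series_parallel V' E' ends'" unfolding V'_def E'_def ends'_def
    by (rule series_parallel.sp_series[OF sp_series.hyps(1-5)])
  have wf: "multigraph V E ends" "loopless E ends" using sp_wf[OF spG] by auto
  have wf': "multigraph V' E' ends'" "loopless E' ends'" using sp_wf[OF spG'] by auto
  have e: "e \<in> E" and ab: "ends e = (a, b)" and w: "w \<notin> V" and e': "e' \<notin> E" using sp_series.hyps by auto
  have ee: "e \<noteq> e'" using e e' by auto
  have fin: "finite E" using wf unfolding multigraph_def by auto
  have aV: "a \<in> V" and bV: "b \<in> V" using wf e ab unfolding multigraph_def by force+
  have e'e: "ends' e = (a, w)" and e'e': "ends' e' = (w, b)" unfolding ends'_def using ee by auto
  have k1: "\<forall>f\<in>E'. 1 \<le> k f" using sp_series.prems(1) unfolding E'_def .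
  have fl: "flowok L V' E' ends' k" using sp_series.prems(2) unfolding V'_def E'_def ends'_def .
  have H: "\<forall>f\<in>E'. q + v f \<noteq> 0 \<and> (nonbridge V' E' ends' f \<longrightarrow> inC (k f) (1 + v f))"
    using sp_series.prems(3) unfolding V'_def E'_def ends'_def .
  define k0 where "k0 = k(e := 1)"
  have fl0: "flowok L V E ends k0" unfolding k0_def
    by (rule flow_ser[OF fl[unfolded V'_def E'_def ends'_def] e e' ab]) (use k1 e in \<open>auto simp: E'_def\<close>)
  have k01: "\<forall>f\<in>E. 1 \<le> k0 f" using k1 unfolding k0_def E'_def by auto
  have nbf: "nonbridge V' E' ends' f" if f: "f \<in> E" "f \<noteq> e" "nonbridge V E ends f" for f
  proof -
    have fe': "f \<noteq> e'" using f e' by auto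
    have ef: "ends' f = ends f" unfolding ends'_def using f fe' by simp
    have "adj (E - {f}) ends \<subseteq> (adj (insert e' (E - {f})) ends')\<^sup>*"
      unfolding ends'_def by (rule ser_adj_sub[where ends = ends and e = e and e' = e' and E = E, OF e e' ab]) auto
    moreover have "insert e' (E - {f}) = E' - {f}" unfolding E'_def using fe' by auto
    ultimately have "(adj (E - {f}) ends)\<^sup>* \<subseteq> (adj (E' - {f}) ends')\<^sup>*"
      by (simp add: rtrancl_subset_rtrancl)
    then show ?thesis using f(3) ef unfolding nonbridge_def conn_def V'_def by auto
  qed
  have nbe: "nonbridge V' E' ends' e \<and> nonbridge V' E' ends' e'" if nb: "nonbridge V E ends e"
  proof -
    have ab1: "(a, b) \<in> (adj (E - {e}) ends)\<^sup>*" using nb ab unfolding nonbridge_def conn_def by auto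
    have cong: "adj (E - {e}) ends = adj (E - {e}) ends'" unfolding ends'_def using e' by (intro adj_cong) auto
    have s1: "adj (E - {e}) ends' \<subseteq> adj (E' - {e}) ends'" unfolding E'_def by (intro adj_mono) auto
    have s2: "adj (E - {e}) ends' \<subseteq> adj (E' - {e'}) ends'" unfolding E'_def using e' by (intro adj_mono) auto
    have abE1: "(a, b) \<in> (adj (E' - {e}) ends')\<^sup>*" using ab1 cong s1 by (metis rtrancl_mono subsetD)
    have abE2: "(a, b) \<in> (adj (E' - {e'}) ends')\<^sup>*" using ab1 cong s2 by (metis rtrancl_mono subsetD)
    have bw: "(b, w) \<in> adj (E' - {e}) ends'"
      using ends_in_adj_sw[of e' "E' - {e}" ends'] e'e' ee unfolding E'_def by auto
    have wa: "(w, a) \<in> adj (E' - {e'}) ends'"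
      using ends_in_adj_sw[of e "E' - {e'}" ends'] e'e ee e unfolding E'_def by auto
    have "(a, w) \<in> (adj (E' - {e}) ends')\<^sup>*" using abE1 bw by (meson rtrancl_into_rtrancl)
    moreover have "(w, b) \<in> (adj (E' - {e'}) ends')\<^sup>*" using abE2 wa by (meson converse_rtrancl_into_rtrancl)
    ultimately show ?thesis unfolding nonbridge_def conn_def V'_def using e'e e'e' aV bV by auto
  qed
  have Hf: "q + v f \<noteq> 0 \<and> (nonbridge V E ends f \<longrightarrow> inC (k0 f) (1 + v f))" if f: "f \<in> E" "f \<noteq> e" for f
    using H nbf[OF f] f unfolding E'_def k0_def by auto
  have qe: "q + v e \<noteq> 0" and qe': "q + v e' \<noteq> 0" using H e unfolding E'_def by auto
  define c where "c B = ncomp V B ends" for B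
  have ZG': "tutteZ V' E' ends' q v = (\<Sum>B\<in>Pow (E - {e}). (\<Prod>f\<in>B. v f) * (q ^ c B * (q + v e + v e') + v e * v e' * q ^ c (insert e B)))"
    unfolding V'_def E'_def ends'_def c_def by (rule Z_ser[OF wf(1) e ab w e'])
  have ZG: "tutteZ V E ends q (v(e := x)) = (\<Sum>B\<in>Pow (E - {e}). (\<Prod>f\<in>B. v f) * (q ^ c B + x * q ^ c (insert e B)))" for x
  proof -
    have "tutteZ V E ends q (v(e := x)) = (\<Sum>B\<in>Pow (E - {e}). (\<Prod>f\<in>B. (v(e := x)) f) * (q ^ c B + (v(e := x)) e * q ^ c (insert e B)))"
      unfolding c_def by (rule tutteZ_split[OF fin e])
    also have "\<dots> = (\<Sum>B\<in>Pow (E - {e}). (\<Prod>f\<in>B. v f) * (q ^ c B + x * q ^ c (insert e B)))"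
    proof (rule sum.cong)
      fix B assume "B \<in> Pow (E - {e})"
      then have "(\<Prod>f\<in>B. (v(e := x)) f) = (\<Prod>f\<in>B. v f)" by (intro prod.cong) auto
      then show "(\<Prod>f\<in>B. (v(e := x)) f) * (q ^ c B + (v(e := x)) e * q ^ c (insert e B)) =
        (\<Prod>f\<in>B. v f) * (q ^ c B + x * q ^ c (insert e B))" by simp
    qed simp
    finally show ?thesis .
  qed
  show ?case
  proof (cases "nonbridge V E ends e")
    case True
    have nb': "nonbridge V' E' ends' e" "nonbridge V' E' ends' e'" using nbe[OF True] by auto
    have eE': "e \<in> E'" "e' \<in> E'" unfolding E'_def using e by auto
    have kc: "k e < L" "k e' < L"
      using nonbridge_cap[OF wf' fl k1 eE'(1)] nonbridge_cap[OF wf' fl k1 eE'(2)] nb'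
      unfolding nonbridge_def by auto
    have c1: "inC (k e) (1 + v e)" and c2: "inC (k e') (1 + v e')" using H eE' nb' by auto
    have A1: "inA q (1 / cmod (q - 1)) (1 + v e)" using inC_A[OF c1] kc by simp
    have A2: "inA q (1 / cmod (q - 1)) (1 + v e')" using inC_A[OF c2] kc by simp
    define u where "u = v e * v e' / (q + v e + v e')"
    have ne: "q + v e + v e' \<noteq> 0" using ser_step(1)[OF A1 A2] .
    have cu: "inC 1 (1 + u)" unfolding u_def using ser_step(2)[OF A1 A2] .
    have qu: "q + u \<noteq> 0" using inA_rho_nz[OF inC_A[OF cu]] Lge by simp
    have IH: "tutteZ V E ends q (v(e := u)) \<noteq> 0"
    proof (rule sp_series.IH[OF k01 fl0])
      show "\<forall>f\<in>E. q + (v(e := u)) f \<noteq> 0 \<and> (nonbridge V E ends f \<longrightarrow> inC (k0 f) (1 + (v(e := u)) f))"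
        using Hf qu cu unfolding k0_def by auto
    qed
    have "tutteZ V' E' ends' q v = (q + v e + v e') * tutteZ V E ends q (v(e := u))"
      unfolding ZG' ZG sum_distrib_left
    proof (rule sum.cong)
      fix B
      have hs: "(q + v e + v e') * u = v e * v e'" unfolding u_def using ne by simp
      have "(q + v e + v e') * ((\<Prod>f\<in>B. v f) * (q ^ c B + u * q ^ c (insert e B))) =
        (\<Prod>f\<in>B. v f) * (q ^ c B * (q + v e + v e')) + ((q + v e + v e') * u) * ((\<Prod>f\<in>B. v f) * q ^ c (insert e B))"
        by (simp add: algebra_simps)
      also have "\<dots> = (\<Prod>f\<in>B. v f) * (q ^ c B * (q + v e + v e') + v e * v e' * q ^ c (insert e B))"
        unfolding hs by (simp add: algebra_simps)
      finally show "(\<Prod>f\<in>B. v f) * (q ^ c B * (q + v e + v e') + v e * v e' * q ^ c (insert e B)) =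
        (q + v e + v e') * ((\<Prod>f\<in>B. v f) * (q ^ c B + u * q ^ c (insert e B)))" by (rule sym)
    qed simp
    then have "tutteZ V' E' ends' q v \<noteq> 0" using IH ne by simp
    then show ?thesis unfolding V'_def E'_def ends'_def .
  next
    case False
    have br: "(a, b) \<notin> conn V (E - {e}) ends" using False ab unfolding nonbridge_def by simp
    have IH: "tutteZ V E ends q (v(e := 0)) \<noteq> 0"
    proof (rule sp_series.IH[OF k01 fl0])
      show "\<forall>f\<in>E. q + (v(e := 0)) f \<noteq> 0 \<and> (nonbridge V E ends f \<longrightarrow> inC (k0 f) (1 + (v(e := 0)) f))"
        using Hf q0 False by auto
    qed
    define S where "S = (\<Sum>B\<in>Pow (E - {e}). (\<Prod>f\<in>B. v f) * q ^ c (insert e B))"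
    have cc: "c B = Suc (c (insert e B))" if "B \<in> Pow (E - {e})" for B
      unfolding c_def using Z_bridge_terms[OF wf(1) e ab br] that by auto
    have Z1: "tutteZ V E ends q (v(e := 0)) = q * S"
      unfolding ZG S_def sum_distrib_left by (rule sum.cong) (auto simp: cc algebra_simps)
    have Z2: "tutteZ V' E' ends' q v = (q + v e) * (q + v e') * S"
      unfolding ZG' S_def sum_distrib_left by (rule sum.cong) (auto simp: cc algebra_simps)
    have "tutteZ V' E' ends' q v \<noteq> 0" using Z1 Z2 IH qe qe' by simp
    then show ?thesis unfolding V'_def E'_def ends'_def .
  qed
next
  case (sp_parallel V E ends e e' k v)
  define ends' where "ends' = ends(e' := ends e)"
  define E' where "E' = insert e' E"
  have spG: "series_parallel V E ends" by fact
  have spG': "series_parallel V E' ends'" unfolding E'_def ends'_def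
    by (rule series_parallel.sp_parallel[OF sp_parallel.hyps(1-3)])
  have wf: "multigraph V E ends" "loopless E ends" using sp_wf[OF spG] by auto
  have wf': "multigraph V E' ends'" "loopless E' ends'" using sp_wf[OF spG'] by auto
  have e: "e \<in> E" and e': "e' \<notin> E" using sp_parallel.hyps by auto
  have ee: "e \<noteq> e'" using e e' by auto
  have fin: "finite E" using wf unfolding multigraph_def by auto
  have abV: "fst (ends e) \<in> V" "snd (ends e) \<in> V" using wf e unfolding multigraph_def by auto
  have e'e: "ends' e = ends e" and e'e': "ends' e' = ends e" unfolding ends'_def using ee by auto
  have k1: "\<forall>f\<in>E'. 1 \<le> k f" using sp_parallel.prems(1) unfolding E'_def .
  have fl: "flowok L V E' ends' k" using sp_parallel.prems(2) unfolding E'_def ends'_def .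
  have H: "\<forall>f\<in>E'. q + v f \<noteq> 0 \<and> (nonbridge V E' ends' f \<longrightarrow> inC (k f) (1 + v f))"
    using sp_parallel.prems(3) unfolding E'_def ends'_def .
  define k0 where "k0 = k(e := k e + k e')"
  define v0 where "v0 = v(e := v e + v e' + v e * v e')"
  have fl0: "flowok L V E ends k0" unfolding k0_def
    by (rule flow_par[OF fl[unfolded E'_def ends'_def] e e'])
  have k01: "\<forall>f\<in>E. 1 \<le> k0 f" using k1 unfolding k0_def E'_def by auto
  have nbf: "nonbridge V E' ends' f" if f: "f \<in> E" "f \<noteq> e" "nonbridge V E ends f" for f
  proof -
    have fe': "f \<noteq> e'" using f e' by auto
    have ef: "ends' f = ends f" unfolding ends'_def using fe' by simp
    have "adj (E - {f}) ends = adj (E - {f}) ends'" unfolding ends'_def using e' by (intro adj_cong) auto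
    also have "\<dots> \<subseteq> adj (E' - {f}) ends'" unfolding E'_def by (intro adj_mono) auto
    finally have "(adj (E - {f}) ends)\<^sup>* \<subseteq> (adj (E' - {f}) ends')\<^sup>*" by (rule rtrancl_mono)
    then show ?thesis using f(3) ef unfolding nonbridge_def conn_def by auto
  qed
  have nb': "nonbridge V E' ends' e" "nonbridge V E' ends' e'"
  proof -
    have "ends e \<in> adj (E' - {e}) ends'" using ends_in_adj[of e' "E' - {e}" ends'] e'e' ee unfolding E'_def by auto
    then show "nonbridge V E' ends' e" unfolding nonbridge_def conn_def using e'e abV by (auto simp: mem_Times_iff)
    have "ends e \<in> adj (E' - {e'}) ends'" using ends_in_adj[of e "E' - {e'}" ends'] e'e ee e unfolding E'_def by auto
    then show "nonbridge V E' ends' e'" unfolding nonbridge_def conn_def using e'e' abV by (auto simp: mem_Times_iff)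
  qed
  have eE': "e \<in> E'" "e' \<in> E'" unfolding E'_def using e by auto
  have kc: "k e < L" "k e' < L"
    using nonbridge_cap[OF wf' fl k1 eE'(1)] nonbridge_cap[OF wf' fl k1 eE'(2)] nb'
    unfolding nonbridge_def by auto
  have c1: "inC (k e) (1 + v e)" and c2: "inC (k e') (1 + v e')" using H eE' nb' by auto
  have A1: "inA q (1 / cmod (q - 1)) (1 + v e)" using inC_A[OF c1] kc by simp
  have A2: "inA q (1 / cmod (q - 1)) (1 + v e')" using inC_A[OF c2] kc by simp
  have pe: "1 + v0 e = (1 + v e) * (1 + v e')" unfolding v0_def by (simp add: algebra_simps)
  have qv0: "q + v0 e \<noteq> 0"
  proof -
    have "(1 + v e) * (1 + v e') + (q - 1) \<noteq> 0" by (rule par_bridge[OF A1 A2])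
    moreover have "q + v0 e = (1 + v0 e) + (q - 1)" by simp
    ultimately show ?thesis unfolding pe by metis
  qed
  have cv0: "inC (k0 e) (1 + v0 e)" if nb: "nonbridge V E ends e"
  proof -
    have "k0 e < L" using nonbridge_cap[OF wf fl0 k01 e] nb unfolding nonbridge_def by auto
    then have "k e + k e' \<le> L - 1" unfolding k0_def by simp
    then have "inC (k e + k e') ((1 + v e) * (1 + v e'))" by (rule inC_par[OF c1 c2])
    then show ?thesis unfolding pe k0_def by simp
  qed
  have IH: "tutteZ V E ends q v0 \<noteq> 0"
  proof (rule sp_parallel.IH[OF k01 fl0])
    show "\<forall>f\<in>E. q + v0 f \<noteq> 0 \<and> (nonbridge V E ends f \<longrightarrow> inC (k0 f) (1 + v0 f))"
    proof
      fix f assume f: "f \<in> E"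
      show "q + v0 f \<noteq> 0 \<and> (nonbridge V E ends f \<longrightarrow> inC (k0 f) (1 + v0 f))"
      proof (cases "f = e")
        case True then show ?thesis using qv0 cv0 by simp
      next
        case False then show ?thesis using H nbf[OF f False] f unfolding v0_def k0_def E'_def by auto
      qed
    qed
  qed
  have "tutteZ V E' ends' q v = tutteZ V E ends q v0"
    unfolding E'_def ends'_def v0_def by (rule Z_par[OF fin e e'])
  then have "tutteZ V E' ends' q v \<noteq> 0" using IH by simp
  then show ?case unfolding E'_def ends'_def .
qed

end



theorem theorem7p1:
  fixes L :: nat and V :: "'v set" and E :: "'e set" and ends :: "'e \<Rightarrow> 'v \<times> 'v"
    and q :: complex and v :: "'e \<Rightarrow> complex"
  assumes "L \<ge> 2"
    and "multigraph V E ends" and "loopless E ends" and "series_parallel V E ends"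
    and "maxmaxflow V E ends \<le> L"
    and hq: "if L = 2 then cmod (q - 1) > 1 / rho_star L else cmod (q - 1) \<ge> 1 / rho_star L"
    and hv: "\<forall>e\<in>E. (v e \<in> \<real> \<and> -1 \<le> Re (v e) \<and> Re (v e) \<le> 0) \<or>
      (q + v e \<noteq> 0 \<and>
        (let \<rho> = 1 / cmod (q - 1); X = (2 / (1 + \<rho>)) powr (1 / (real L - 1));
             B = \<rho> * (X - 1) / (1 - \<rho> * X)
         in if L = 2 then cmod (v e / (q + v e)) < B else cmod (v e / (q + v e)) \<le> B))"
  shows "tutteZ V E ends q v \<noteq> 0"
proof -
  note Lge = assms(1)
  define R where "R = cmod (q - 1)"
  define \<rho> where "\<rho> = 1 / R"
  define X where "X = (2 / (1 + \<rho>)) powr (1 / (real L - 1))"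
  have R1: "R > 1"
  proof (cases "L = 2")
    case True
    have "rho_star L = 1" unfolding rho_star_def using True by simp
    then show ?thesis using hq True unfolding R_def by simp
  next
    case False
    then have L3: "L \<ge> 3" using Lge by simp
    have "R \<ge> 1 / rho_star L" using hq False unfolding R_def by simp
    moreover have "1 / rho_star L > 1" using rho_star_props(1,2)[OF L3] by (simp add: field_simps)
    ultimately show ?thesis by simp
  qed
  have \<rho>: "0 < \<rho>" "\<rho> < 1" unfolding \<rho>_def using R1 by (auto simp: divide_less_eq_1)
  have ineq: "(1 + \<rho>) ^ L \<le> 2 * (1 + \<rho>\<^sup>2) ^ (L - 1)"
  proof (cases "L = 2")
    case True
    have "0 \<le> (1 - \<rho>)\<^sup>2" by simp
    then show ?thesis using True by (simp add: power2_eq_square algebra_simps)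
  next
    case False
    then have L3: "L \<ge> 3" using Lge by simp
    have "R \<ge> 1 / rho_star L" using hq False unfolding R_def by simp
    then have "\<rho> \<le> rho_star L" unfolding \<rho>_def using rho_star_props(1)[OF L3] R1
      by (simp add: field_simps)
    then show ?thesis using rho_star_props(3)[OF L3, of \<rho>] \<rho> by simp
  qed
  define a where "a = 2 / (1 + \<rho>)"
  have a1: "a > 1" unfolding a_def using \<rho> by (simp add: field_simps)
  have aR: "a < R"
  proof -
    have "a = 2 * R / (R + 1)" unfolding a_def \<rho>_def using R1 by (simp add: field_simps)
    also have "\<dots> < R" using R1 by (simp add: divide_less_eq)
    finally show ?thesis .
  qed
  have L1: "real (L - 1) = real L - 1" using Lge by simp
  have Lpos: "real L - 1 > 0" using Lge by simp
  have X1: "X > 1" unfolding X_def a_def[symmetric] using a1 Lpos by simp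
  have XL: "X ^ (L - 1) = a"
  proof -
    have "X ^ (L - 1) = X powr real (L - 1)" using X1 by (simp add: powr_realpow)
    also have "\<dots> = a powr (1 / (real L - 1) * real (L - 1))" unfolding X_def a_def[symmetric] by (simp add: powr_powr)
    also have "1 / (real L - 1) * real (L - 1) = 1" using L1 Lpos by simp
    finally show ?thesis using a1 by simp
  qed
  have XR: "X < R"
  proof -
    have "X ^ 1 \<le> X ^ (L - 1)" using X1 Lge by (intro power_increasing) auto
    then show ?thesis using XL aR by simp
  qed
  have Xlow: "(1 + \<rho>) / (1 + \<rho>\<^sup>2) \<le> X"
  proof -
    have p: "(1 + \<rho>\<^sup>2) ^ (L - 1) > 0" using \<rho> by (intro zero_less_power) (simp add: add_pos_nonneg)
    have LL: "L = Suc (L - 1)" using Lge by simp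
    have "(1 + \<rho>) ^ L = (1 + \<rho>) * (1 + \<rho>) ^ (L - 1)" by (subst LL) simp
    then have "(1 + \<rho>) * (1 + \<rho>) ^ (L - 1) \<le> 2 * (1 + \<rho>\<^sup>2) ^ (L - 1)" using ineq by simp
    then have "(1 + \<rho>) ^ (L - 1) / (1 + \<rho>\<^sup>2) ^ (L - 1) \<le> 2 / (1 + \<rho>)"
      using p \<rho> by (simp add: field_simps)
    then have h: "((1 + \<rho>) / (1 + \<rho>\<^sup>2)) ^ (L - 1) \<le> X ^ (L - 1)" unfolding XL a_def by (simp add: power_divide)
    have LL2: "L - 1 = Suc (L - 2)" using Lge by simp
    show ?thesis by (rule power_le_imp_le_base[of _ "L - 2"]) (use h LL2 X1 in auto)
  qed
  have key: "\<rho>\<^sup>2 \<le> bfun R X"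
  proof -
    have RX: "R - X > 0" using XR by simp
    have "1 + \<rho> \<le> X * (1 + \<rho>\<^sup>2)" using Xlow \<rho> by (simp add: divide_le_eq add_pos_nonneg)
    moreover have "\<rho>\<^sup>2 * R = \<rho>" unfolding \<rho>_def using R1 by (simp add: power2_eq_square)
    ultimately have "\<rho>\<^sup>2 * (R - X) \<le> X - 1" by (simp add: algebra_simps)
    then show ?thesis unfolding bfun_def using RX by (simp add: le_divide_eq)
  qed
  have Bfun: "\<rho> * (X - 1) / (1 - \<rho> * X) = bfun R X"
    unfolding bfun_def \<rho>_def using R1 XR by (simp add: field_simps)
  have Lg: "2 \<le> L" and R1': "1 < cmod (q - 1)" and XL': "X ^ (L - 1) = 2 / (1 + 1 / cmod (q - 1))"
    and key': "(1 / cmod (q - 1))\<^sup>2 \<le> bfun (cmod (q - 1)) X"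
    using Lge R1 XL key unfolding a_def \<rho>_def R_def by auto
  note ctx = Lg R1' X1 XL' key'
  have q0: "q \<noteq> 0" using R1' by auto
  have bX: "0 \<le> bfun R (X ^ 1)" using X1 XR by (intro bfun_nonneg) auto
  have edge: "inC q X 1 (1 + v e)" if e: "e \<in> E" for e
  proof -
    from hv e have "(v e \<in> \<real> \<and> -1 \<le> Re (v e) \<and> Re (v e) \<le> 0) \<or>
      (q + v e \<noteq> 0 \<and> cmod (v e / (q + v e)) \<le> \<rho> * (X - 1) / (1 - \<rho> * X))"
      unfolding Let_def \<rho>_def[symmetric, unfolded R_def[symmetric]] X_def[symmetric] R_def[symmetric]
      by (auto split: if_splits)
    then show ?thesis
    proof
      assume h: "v e \<in> \<real> \<and> -1 \<le> Re (v e) \<and> Re (v e) \<le> 0"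
      then have ve: "v e = of_real (Re (v e))" by (simp add: complex_is_Real_iff complex_eq_iff)
      have "1 + v e = of_real (1 + Re (v e)) * 1" by (subst ve) simp
      moreover have "inA q (bfun (cmod (q - 1)) (X ^ 1)) 1" using inA_one[OF q0] bX unfolding R_def by simp
      ultimately show ?thesis unfolding inC_def[OF ctx] using h by (intro exI[of _ "1 + Re (v e)"] exI[of _ 1]) auto
    next
      assume h: "q + v e \<noteq> 0 \<and> cmod (v e / (q + v e)) \<le> \<rho> * (X - 1) / (1 - \<rho> * X)"
      have x: "1 + v e - 1 = v e" "1 + v e + (q - 1) = q + v e" by simp_all
      have "inA q (bfun (cmod (q - 1)) (X ^ 1)) (1 + v e)"
        unfolding inA_def x using h Bfun unfolding R_def by simp
      then show ?thesis unfolding inC_def[OF ctx] by (intro exI[of _ 1] exI[of _ "1 + v e"]) simp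
    qed
  qed
  have nz: "q + v e \<noteq> 0" if e: "e \<in> E" for e
    using inA_rho_nz[OF ctx inC_A[OF ctx edge[OF e]]] Lge by simp
  show ?thesis
  proof (rule main_gen[OF ctx assms(4)])
    show "\<forall>f\<in>E. 1 \<le> (\<lambda>_. 1::nat) f" by simp
    show "flowok L V E ends (\<lambda>_. 1)" by (rule flow_init[OF assms(2,5)])
    show "\<forall>f\<in>E. q + v f \<noteq> 0 \<and> (nonbridge V E ends f \<longrightarrow> inC q X ((\<lambda>_. 1) f) (1 + v f))"
      using nz edge by auto
  qed
qed


end
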